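(* Let $H=L^2([0,1])$ with orthonormal basis $(e_j)_{j\ge1}$. For each $n\ge4$, let $P=P_n$ be the $(n-2)\times n$ second-order differencing matrix acting componentwise on $H^n$, and let $\mathbf{X}=\mathbf{X}^{(n)}\in H^n$ follow the model $\mathbf{X}=\mathbf{Y}+\mathbf{U}$, $\mathbf{Y}=Y_0+P'(PP')^{-1}\mathbf{V}$, where $Y_0\in H^n$ is deterministic with $PY_0=0$; $\mathbf{U}_1,\dots,\mathbf{U}_n$ are i.i.d. centered Gaussian $H$-valued with covariance $\Sigma_u$; $\mathbf{V}_1,\dots,\mathbf{V}_{n-2}$ are i.i.d. centered Gaussian $H$-valued with covariance $\Sigma_v$; the family $(\mathbf{U}_r)$ is independent of $(\mathbf{V}_s)$; and $\Sigma_u,\Sigma_v$ (not depending on $n$) are self-adjoint, positive definite, trace class with $\Sigma_ue_j=\mu_je_j$, $\Sigma_ve_j=\tau_je_j$, $\mu_j,\tau_j>0$. For each $j$ write $PX^j(i)$ for the $i$-th component of $P\bar X^j\in\mathbb{R}^{n-2}$ and set $$\hat\mu_j(n)=-\frac{1}{4(n-3)}\sum_{i=1}^{n-3}PX^j(i)\,PX^j(i+1),\qquad \hat\tau_j(n)=\frac{1}{n-2}\sum_{i=1}^{n-2}PX^j(i)^2+\frac{3}{2(n-3)}\sum_{i=1}^{n-3}PX^j(i)\,PX^j(i+1),$$ and $\hat\Sigma_u(n)h=\sum_{j\ge1}\hat\mu_j(n)\langle h,e_j\rangle e_j$, $\hat\Sigma_v(n)h=\sum_{j\ge1}\hat\tau_j(n)\langle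 h,e_j\rangle e_j$. Then $\hat\Sigma_u(n)$ and $\hat\Sigma_v(n)$ are consistent estimators of $\Sigma_u$ and $\Sigma_v$: for every $h\in H$, $\hat\Sigma_u(n)h\to\Sigma_uh$ and $\hat\Sigma_v(n)h\to\Sigma_vh$ in probability in $H$ as $n\to\infty$.
   Context: For $\mathbf{Z}\in H^n$, $\bar Z^j=(\langle \mathbf{Z}_1,e_j\rangle,\dots,\langle \mathbf{Z}_n,e_j\rangle)\in\mathbb{R}^n$. $P$ has rows $(0,\dots,0,1,-2,1,0,\dots,0)$, so $PX^j(i)=x^j_{i+2}-2x^j_{i+1}+x^j_i$ where $x^j_i=\langle\mathbf{X}_i,e_j\rangle$. *)

theory Defs
  imports "HOL-Probability.Probability"
begin

definition orthonormal_basis :: "(nat \<Rightarrow> 'h::{real_inner,complete_space}) \<Rightarrow> bool" where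
  "orthonormal_basis e \<longleftrightarrow>
     (\<forall>i j. e i \<bullet> e j = (if i = j then 1 else 0)) \<and> closure (span (range e)) = UNIV"

text \<open>Second-order differencing matrix P_n, size (n-2) x n, 1-based indices
  (row i has 1, -2, 1 in columns i, i+1, i+2); zero outside the index ranges.\<close>
definition Pmat :: "nat \<Rightarrow> nat \<Rightarrow> nat \<Rightarrow> real" where
  "Pmat n i l = (if i \<in> {1..n-2} \<and> l \<in> {1..n} then
      (if l = i then 1 else if l = i + 1 then -2 else if l = i + 2 then 1 else 0) else 0)"

definition PPt :: "nat \<Rightarrow> nat \<Rightarrow> nat \<Rightarrow> real" where
  "PPt n i k = (\<Sum>l=1..n. Pmat n i l * Pmat n k l)"

definition PPt_inv :: "nat \<Rightarrow> nat \<Rightarrow> nat \<Rightarrow> real" where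
  "PPt_inv n = (THE G. (\<forall>i\<in>{1..n-2}. \<forall>k\<in>{1..n-2}.
        (\<Sum>l=1..n-2. G i l * PPt n l k) = (if i = k then 1 else 0))
      \<and> (\<forall>i k. (i \<notin> {1..n-2} \<or> k \<notin> {1..n-2}) \<longrightarrow> G i k = 0))"

definition Qmat :: "nat \<Rightarrow> nat \<Rightarrow> nat \<Rightarrow> real" where
  "Qmat n i s = (\<Sum>k=1..n-2. Pmat n k i * PPt_inv n k s)"

definition real_centered_gaussian :: "'a measure \<Rightarrow> ('a \<Rightarrow> real) \<Rightarrow> real \<Rightarrow> bool" where
  "real_centered_gaussian M Z v \<longleftrightarrow>
     (v = 0 \<and> (AE \<omega> in M. Z \<omega> = 0)) \<or>
     (v > 0 \<and> distributed M lborel Z (normal_density 0 (sqrt v)))"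

definition centered_gaussian :: "'a measure \<Rightarrow> ('a \<Rightarrow> 'h::{real_inner,complete_space})
      \<Rightarrow> ('h \<Rightarrow> 'h) \<Rightarrow> bool" where
  "centered_gaussian M X S \<longleftrightarrow> X \<in> borel_measurable M \<and>
     (\<forall>h. real_centered_gaussian M (\<lambda>\<omega>. X \<omega> \<bullet> h) (S h \<bullet> h))"

text \<open>Convergence in probability of Z n to a constant c (outer-probability form,
  so no measurability of the deviation events is presupposed).\<close>
definition conv_in_prob :: "'a measure \<Rightarrow> (nat \<Rightarrow> 'a \<Rightarrow> 'h::metric_space) \<Rightarrow> 'h \<Rightarrow> bool" where
  "conv_in_prob M Z c \<longleftrightarrow> (\<forall>\<epsilon>>0. \<forall>\<delta>>0. eventually (\<lambda>n.
      \<exists>A\<in>sets M. {\<omega>\<in>space M. dist (Z n \<omega>) c > \<epsilon>} \<subseteq> A \<and> measure M A < \<delta>) sequentially)"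

definition diag_cov_operator :: "(nat \<Rightarrow> 'h::{real_inner,complete_space}) \<Rightarrow> ('h \<Rightarrow> 'h) \<Rightarrow> (nat \<Rightarrow> real) \<Rightarrow> bool" where
  "diag_cov_operator e S lam \<longleftrightarrow> bounded_linear S \<and> (\<forall>x y. S x \<bullet> y = x \<bullet> S y)
     \<and> (\<forall>x. x \<noteq> 0 \<longrightarrow> S x \<bullet> x > 0) \<and> summable (\<lambda>j. S (e j) \<bullet> e j)
     \<and> (\<forall>j. S (e j) = lam j *\<^sub>R e j \<and> lam j > 0)"

definition PXc :: "nat \<Rightarrow> (nat \<Rightarrow> 'h::real_inner) \<Rightarrow> 'h \<Rightarrow> nat \<Rightarrow> real" where
  "PXc n X ej i = (\<Sum>l=1..n. Pmat n i l * (X l \<bullet> ej))"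

definition mu_hat :: "nat \<Rightarrow> (nat \<Rightarrow> 'h::real_inner) \<Rightarrow> 'h \<Rightarrow> real" where
  "mu_hat n X ej = - (1 / (4 * (real n - 3))) *
     (\<Sum>i=1..n-3. PXc n X ej i * PXc n X ej (i+1))"

definition tau_hat :: "nat \<Rightarrow> (nat \<Rightarrow> 'h::real_inner) \<Rightarrow> 'h \<Rightarrow> real" where
  "tau_hat n X ej = (1 / (real n - 2)) * (\<Sum>i=1..n-2. (PXc n X ej i)^2)
     + (3 / (2 * (real n - 3))) * (\<Sum>i=1..n-3. PXc n X ej i * PXc n X ej (i+1))"

end

theory Submission
  imports Defs "Jordan_Normal_Form.Determinant"
begin

no_notation scalar_prod (infix \<open>\<bullet>\<close> 70)




lemma Pmat_zero_gt: "l < i \<Longrightarrow> Pmat n i l = 0"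
  by (auto simp: Pmat_def)

lemma Pmat_diag: "i \<in> {1..n-2} \<Longrightarrow> n \<ge> 2 \<Longrightarrow> Pmat n i i = 1"
  by (auto simp: Pmat_def)

lemma sum_shift1: "(\<Sum>p<m. f (Suc p)) = (\<Sum>p=1..m. f p)"
  by (induct m) (simp_all add: lessThan_Suc add.commute)

lemma quad_form:
  fixes x :: "nat \<Rightarrow> real"
  shows "(\<Sum>i=1..m. \<Sum>k=1..m. x i * PPt n i k * x k) = (\<Sum>l=1..n. (\<Sum>i=1..m. Pmat n i l * x i)^2)"
proof -
  have "(\<Sum>i=1..m. \<Sum>k=1..m. x i * PPt n i k * x k)
      = (\<Sum>i=1..m. \<Sum>k=1..m. \<Sum>l=1..n. (Pmat n i l * x i) * (Pmat n k l * x k))"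
    unfolding PPt_def by (simp add: sum_distrib_left sum_distrib_right mult_ac)
  also have "\<dots> = (\<Sum>i=1..m. \<Sum>l=1..n. \<Sum>k=1..m. (Pmat n i l * x i) * (Pmat n k l * x k))"
    by (rule sum.cong[OF refl], rule sum.swap)
  also have "\<dots> = (\<Sum>l=1..n. \<Sum>i=1..m. \<Sum>k=1..m. (Pmat n i l * x i) * (Pmat n k l * x k))"
    by (rule sum.swap)
  also have "\<dots> = (\<Sum>l=1..n. (\<Sum>i=1..m. Pmat n i l * x i)^2)"
    by (simp add: power2_eq_square sum_product)
  finally show ?thesis .
qed

lemma PPt_inj:
  fixes x :: "nat \<Rightarrow> real"
  assumes n: "n \<ge> 4" and x0: "\<And>i. i \<notin> {1..n-2} \<Longrightarrow> x i = 0"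
    and Ax: "\<And>i. i \<in> {1..n-2} \<Longrightarrow> (\<Sum>k=1..n-2. PPt n i k * x k) = 0"
  shows "x i = 0"
proof -
  let ?m = "n - 2"
  have "(\<Sum>i=1..?m. \<Sum>k=1..?m. x i * PPt n i k * x k) = (\<Sum>i=1..?m. x i * (\<Sum>k=1..?m. PPt n i k * x k))"
    by (simp add: sum_distrib_left mult.assoc)
  also have "\<dots> = 0" using Ax by simp
  finally have "(\<Sum>l=1..n. (\<Sum>i=1..?m. Pmat n i l * x i)^2) = 0" using quad_form[where x=x and m="?m" and n=n] by simp
  hence y: "\<And>l. l \<in> {1..n} \<Longrightarrow> (\<Sum>i=1..?m. Pmat n i l * x i) = 0"
    by (subst (asm) sum_nonneg_eq_0_iff) auto
  have "\<forall>i\<le>l. x i = 0" for l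
  proof (induction l)
    case 0 then show ?case using x0 by auto
  next
    case (Suc l)
    have "x (Suc l) = 0"
    proof (cases "Suc l \<in> {1..?m}")
      case False then show ?thesis using x0 by blast
    next
      case True
      have "(\<Sum>i=1..?m. Pmat n i (Suc l) * x i) = (\<Sum>i=1..?m. if i = Suc l then x i else 0)"
      proof (rule sum.cong)
        fix i assume "i \<in> {1..?m}"
        show "Pmat n i (Suc l) * x i = (if i = Suc l then x i else 0)"
        proof (cases "i \<le> l")
          case True then show ?thesis using Suc by auto
        next
          case False
          show ?thesis
          proof (cases "i = Suc l")
            case True then show ?thesis using Pmat_diag[of i n] \<open>i \<in> {1..?m}\<close> n by simp
          next
            case F: False
            with False have "Suc l < i" by simp
            then show ?thesis using F by (simp add: Pmat_zero_gt)
          qed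
        qed
      qed simp
      also have "\<dots> = x (Suc l)" using True by simp
      finally show ?thesis using y[of "Suc l"] True by auto
    qed
    then show ?case using Suc by (auto simp: le_Suc_eq)
  qed
  then show ?thesis by blast
qed

lemma PPt_inverse:
  assumes n: "n \<ge> 4"
  defines "m \<equiv> n - 2"
  shows "\<forall>i\<in>{1..m}. \<forall>k\<in>{1..m}. (\<Sum>l=1..m. PPt_inv n i l * PPt n l k) = (if i = k then 1 else 0)"
    and "\<forall>i\<in>{1..m}. \<forall>k\<in>{1..m}. (\<Sum>l=1..m. PPt n i l * PPt_inv n l k) = (if i = k then 1 else 0)"
proof -
  define A :: "real mat" where "A = mat m m (\<lambda>(i,k). PPt n (Suc i) (Suc k))"
  have A: "A \<in> carrier_mat m m" by (simp add: A_def)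
  have "det A \<noteq> 0"
  proof
    assume "det A = 0"
    then obtain v where v: "v \<in> carrier_vec m" "v \<noteq> 0\<^sub>v m" "A *\<^sub>v v = 0\<^sub>v m"
      using det_0_iff_vec_prod_zero_field[OF A] by blast
    define x where "x l = (if l \<in> {1..m} then v $ (l - 1) else 0)" for l
    have "x i = 0" for i
    proof (rule PPt_inj[OF n])
      show "i \<notin> {1..n-2} \<Longrightarrow> x i = 0" for i by (auto simp: x_def m_def)
      fix i assume i: "i \<in> {1..n-2}"
      have "0 = (A *\<^sub>v v) $ (i - 1)" using v i by (auto simp: m_def)
      also have "\<dots> = (\<Sum>p<m. A $$ (i - 1, p) * v $ p)"
        using v(1) i A by (auto simp: scalar_prod_def m_def lessThan_atLeast0)
      also have "\<dots> = (\<Sum>p<m. PPt n i (Suc p) * x (Suc p))"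
        using i by (intro sum.cong) (auto simp: A_def x_def m_def)
      also have "\<dots> = (\<Sum>k=1..n-2. PPt n i k * x k)"
        using sum_shift1[where f="\<lambda>k. PPt n i k * x k" and m="n-2"] by (simp add: m_def)
      finally show "(\<Sum>k=1..n-2. PPt n i k * x k) = 0" by simp
    qed
    have "v = 0\<^sub>v m"
    proof (rule eq_vecI)
      fix p assume "p < dim_vec (0\<^sub>v m :: real vec)"
      then have p: "p < m" by simp
      have "x (Suc p) = 0" by fact
      then show "v $ p = 0\<^sub>v m $ p" using p by (simp add: x_def)
    qed (use v(1) in simp)
    with v(2) show False by simp
  qed
  then have "A \<in> Units (ring_mat TYPE(real) m ())" by (rule det_non_zero_imp_unit[OF A])
  then obtain B where B: "B \<in> carrier_mat m m" "B * A = 1\<^sub>m m" "A * B = 1\<^sub>m m"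
    by (auto simp: Units_def ring_mat_def)
  define G where "G i k = (if i \<in> {1..m} \<and> k \<in> {1..m} then B $$ (i - 1, k - 1) else 0)" for i k
  have left: "(\<Sum>l=1..m. G i l * PPt n l k) = (if i = k then 1 else 0)" if "i \<in> {1..m}" "k \<in> {1..m}" for i k
  proof -
    have "(\<Sum>l=1..m. G i l * PPt n l k) = (\<Sum>p<m. G i (Suc p) * PPt n (Suc p) k)" by (rule sum_shift1[symmetric])
    also have "\<dots> = (\<Sum>p<m. B $$ (i - 1, p) * A $$ (p, k - 1))"
      using that by (intro sum.cong) (auto simp: A_def G_def)
    also have "\<dots> = (B * A) $$ (i - 1, k - 1)"
      using that A B(1) by (auto simp: scalar_prod_def lessThan_atLeast0)
    also have "\<dots> = (if i = k then 1 else 0)" using that B by auto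
    finally show ?thesis .
  qed
  have right: "(\<Sum>l=1..m. PPt n i l * G l k) = (if i = k then 1 else 0)" if "i \<in> {1..m}" "k \<in> {1..m}" for i k
  proof -
    have "(\<Sum>l=1..m. PPt n i l * G l k) = (\<Sum>p<m. PPt n i (Suc p) * G (Suc p) k)" by (rule sum_shift1[symmetric])
    also have "\<dots> = (\<Sum>p<m. A $$ (i - 1, p) * B $$ (p, k - 1))"
      using that by (intro sum.cong) (auto simp: A_def G_def)
    also have "\<dots> = (A * B) $$ (i - 1, k - 1)"
      using that A B(1) by (auto simp: scalar_prod_def lessThan_atLeast0)
    also have "\<dots> = (if i = k then 1 else 0)" using that B by auto
    finally show ?thesis .
  qed
  have "PPt_inv n = G"
    unfolding PPt_inv_def
  proof (rule the_equality)
    show "(\<forall>i\<in>{1..n-2}. \<forall>k\<in>{1..n-2}. (\<Sum>l=1..n-2. G i l * PPt n l k) = (if i = k then 1 else 0))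
        \<and> (\<forall>i k. (i \<notin> {1..n-2} \<or> k \<notin> {1..n-2}) \<longrightarrow> G i k = 0)"
      using left by (auto simp: m_def G_def)
  next
    fix G' assume G': "(\<forall>i\<in>{1..n-2}. \<forall>k\<in>{1..n-2}. (\<Sum>l=1..n-2. G' i l * PPt n l k) = (if i = k then 1 else 0))
        \<and> (\<forall>i k. (i \<notin> {1..n-2} \<or> k \<notin> {1..n-2}) \<longrightarrow> G' i k = 0)"
    show "G' = G"
    proof (intro ext)
      fix i k
      show "G' i k = G i k"
      proof (cases "i \<in> {1..m} \<and> k \<in> {1..m}")
        case False then show ?thesis using G' by (auto simp: G_def m_def)
      next
        case True
        have "G' i k = (\<Sum>l=1..m. G' i l * (if l = k then 1 else 0))"
          using True by (simp add: if_distrib cong: if_cong)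
        also have "\<dots> = (\<Sum>l=1..m. G' i l * (\<Sum>p=1..m. PPt n l p * G p k))"
          using True right by (intro sum.cong) auto
        also have "\<dots> = (\<Sum>p=1..m. (\<Sum>l=1..m. G' i l * PPt n l p) * G p k)"
          by (simp add: sum_distrib_left sum_distrib_right mult.assoc) (rule sum.swap)
        also have "\<dots> = (\<Sum>p=1..m. (if i = p then 1 else 0) * G p k)"
          using True G' by (intro sum.cong) (auto simp: m_def)
        also have "\<dots> = (\<Sum>p=1..m. if p = i then G p k else 0)"
          by (intro sum.cong) auto
        also have "\<dots> = G i k" using True by simp
        finally show ?thesis .
      qed
    qed
  qed
  then show "\<forall>i\<in>{1..m}. \<forall>k\<in>{1..m}. (\<Sum>l=1..m. PPt_inv n i l * PPt n l k) = (if i = k then 1 else 0)"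
    and "\<forall>i\<in>{1..m}. \<forall>k\<in>{1..m}. (\<Sum>l=1..m. PPt n i l * PPt_inv n l k) = (if i = k then 1 else 0)"
    using left right by auto
qed

lemma PQ_id:
  assumes n: "n \<ge> 4" and i: "i \<in> {1..n-2}" and s: "s \<in> {1..n-2}"
  shows "(\<Sum>l=1..n. Pmat n i l * Qmat n l s) = (if i = s then 1 else 0)"
proof -
  have "(\<Sum>l=1..n. Pmat n i l * Qmat n l s) = (\<Sum>l=1..n. \<Sum>k=1..n-2. Pmat n i l * Pmat n k l * PPt_inv n k s)"
    by (simp add: Qmat_def sum_distrib_left mult.assoc)
  also have "\<dots> = (\<Sum>k=1..n-2. \<Sum>l=1..n. Pmat n i l * Pmat n k l * PPt_inv n k s)"
    by (rule sum.swap)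
  also have "\<dots> = (\<Sum>k=1..n-2. PPt n i k * PPt_inv n k s)"
    by (simp add: PPt_def sum_distrib_right)
  also have "\<dots> = (if i = s then 1 else 0)" using PPt_inverse(2)[OF n] i s by auto
  finally show ?thesis .
qed



definition orthonormal :: "(nat \<Rightarrow> 'h::real_inner) \<Rightarrow> bool" where
  "orthonormal e \<longleftrightarrow> (\<forall>i j. e i \<bullet> e j = (if i = j then 1 else 0))"

lemma ob_orthonormal: "orthonormal_basis e \<Longrightarrow> orthonormal e"
  by (simp add: orthonormal_basis_def orthonormal_def)

lemma norm_sum_on:
  fixes e :: "nat \<Rightarrow> 'h::{real_inner,complete_space}"
  assumes "orthonormal e" "finite F"
  shows "(norm (\<Sum>j\<in>F. c j *\<^sub>R e j))^2 = (\<Sum>j\<in>F. (c j)^2)"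
proof -
  have "(norm (\<Sum>j\<in>F. c j *\<^sub>R e j))^2 = (\<Sum>j\<in>F. c j *\<^sub>R e j) \<bullet> (\<Sum>j\<in>F. c j *\<^sub>R e j)"
    by (simp add: power2_norm_eq_inner)
  also have "\<dots> = (\<Sum>i\<in>F. (c i *\<^sub>R e i) \<bullet> (\<Sum>j\<in>F. c j *\<^sub>R e j))"
    by (rule inner_sum_left)
  also have "\<dots> = (\<Sum>i\<in>F. \<Sum>j\<in>F. c i * c j * (e i \<bullet> e j))"
    by (simp add: inner_sum_right sum_distrib_left mult_ac)
  also have "\<dots> = (\<Sum>i\<in>F. (c i)^2)"
  proof (rule sum.cong[OF refl])
    fix i assume i: "i \<in> F"
    have "(\<Sum>j\<in>F. c i * c j * (e i \<bullet> e j)) = (\<Sum>j\<in>F. if j = i then c i * c j else 0)"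
      using assms(1) by (intro sum.cong refl) (simp add: orthonormal_def)
    also have "\<dots> = (c i)^2" using i assms(2) by (simp add: power2_eq_square)
    finally show "(\<Sum>j\<in>F. c i * c j * (e i \<bullet> e j)) = (c i)^2" .
  qed
  finally show ?thesis .
qed

lemma summable_on:
  fixes e :: "nat \<Rightarrow> 'h::{real_inner,complete_space}"
  assumes "orthonormal e" "summable (\<lambda>j. (c j)^2)"
  shows "summable (\<lambda>j. c j *\<^sub>R e j)"
proof -
  let ?S = "\<lambda>N. \<Sum>j<N. c j *\<^sub>R e j"
  have d: "dist (?S m) (?S n) = norm (\<Sum>j\<in>{m..<n}. c j *\<^sub>R e j)" if "m \<le> n" for m n
  proof -
    have "?S n - ?S m = (\<Sum>j\<in>{m..<n}. c j *\<^sub>R e j)"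
      using sum_diff_nat_ivl[of 0 m n "\<lambda>j. c j *\<^sub>R e j"] that by (simp add: atLeast0LessThan)
    moreover have "dist (?S m) (?S n) = norm (?S n - ?S m)" unfolding dist_norm by (rule norm_minus_commute)
    ultimately show ?thesis by simp
  qed
  have "Cauchy ?S"
    unfolding Cauchy_def
  proof (intro allI impI)
    fix r :: real assume r: "r > 0"
    have "r^2 > 0" using r by simp
    from assms(2)[unfolded summable_Cauchy, rule_format, OF this] obtain N where
      N: "\<forall>m\<ge>N. \<forall>n. norm (\<Sum>j\<in>{m..<n}. (c j)^2) < r^2"
      by blast
    have bnd: "norm (\<Sum>j\<in>{m..<n}. c j *\<^sub>R e j) < r" if "m \<ge> N" for m n
    proof -
      have "(norm (\<Sum>j\<in>{m..<n}. c j *\<^sub>R e j))^2 < r^2"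
        using N norm_sum_on[OF assms(1), of "{m..<n}" c] that by (auto simp: abs_less_iff)
      then show ?thesis by (rule power2_less_imp_less) (use r in simp)
    qed
    show "\<exists>M. \<forall>m\<ge>M. \<forall>n\<ge>M. dist (?S m) (?S n) < r"
    proof (intro exI allI impI)
      fix m n assume "m \<ge> N" "n \<ge> N"
      show "dist (?S m) (?S n) < r"
      proof (cases "m \<le> n")
        case True then show ?thesis using d bnd \<open>m \<ge> N\<close> by simp
      next
        case False then show ?thesis using d[of n m] bnd \<open>n \<ge> N\<close> by (simp add: dist_commute)
      qed
    qed
  qed
  then have "convergent ?S" by (rule Cauchy_convergent)
  then show ?thesis by (simp add: summable_iff_convergent)
qed

lemma norm_suminf_on:
  fixes e :: "nat \<Rightarrow> 'h::{real_inner,complete_space}"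
  assumes "orthonormal e" "summable (\<lambda>j. (c j)^2)"
  shows "(norm (\<Sum>j. c j *\<^sub>R e j))^2 = (\<Sum>j. (c j)^2)"
proof -
  have "(\<lambda>N. (norm (\<Sum>j<N. c j *\<^sub>R e j))^2) \<longlonglongrightarrow> (norm (\<Sum>j. c j *\<^sub>R e j))^2"
    by (intro tendsto_intros summable_LIMSEQ summable_on[OF assms])
  moreover have "(\<lambda>N. (norm (\<Sum>j<N. c j *\<^sub>R e j))^2) = (\<lambda>N. \<Sum>j<N. (c j)^2)"
    using norm_sum_on[OF assms(1)] by simp
  ultimately have "(\<lambda>N. \<Sum>j<N. (c j)^2) \<longlonglongrightarrow> (norm (\<Sum>j. c j *\<^sub>R e j))^2" by simp
  moreover have "(\<lambda>N. \<Sum>j<N. (c j)^2) \<longlonglongrightarrow> (\<Sum>j. (c j)^2)"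
    by (rule summable_LIMSEQ[OF assms(2)])
  ultimately show ?thesis by (rule LIMSEQ_unique)
qed

lemma inner_suminf_on:
  fixes e :: "nat \<Rightarrow> 'h::{real_inner,complete_space}"
  assumes "orthonormal e" "summable (\<lambda>j. (c j)^2)"
  shows "(\<Sum>j. c j *\<^sub>R e j) \<bullet> e k = c k"
proof -
  have "(\<Sum>j. c j *\<^sub>R e j) \<bullet> e k = (\<Sum>j. (c j *\<^sub>R e j) \<bullet> e k)"
    by (rule bounded_linear.suminf[OF bounded_linear_inner_left summable_on[OF assms]])
  also have "\<dots> = (\<Sum>j. if j = k then c k else 0)"
    using assms(1) by (intro suminf_cong) (auto simp: orthonormal_def)
  also have "\<dots> = c k" by (subst suminf_finite[of "{k}"]) auto
  finally show ?thesis .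
qed

lemma bessel:
  fixes e :: "nat \<Rightarrow> 'h::{real_inner,complete_space}"
  assumes "orthonormal e"
  shows "summable (\<lambda>j. (h \<bullet> e j)^2)"
proof (rule summableI_nonneg_bounded[where x="(norm h)^2"])
  fix N
  have "0 \<le> (norm (h - (\<Sum>j<N. (h \<bullet> e j) *\<^sub>R e j)))^2" by simp
  also have "\<dots> = (norm h)^2 - 2 * (h \<bullet> (\<Sum>j<N. (h \<bullet> e j) *\<^sub>R e j)) + (norm (\<Sum>j<N. (h \<bullet> e j) *\<^sub>R e j))^2"
    by (simp add: power2_norm_eq_inner inner_diff_left inner_diff_right inner_commute)
  also have "h \<bullet> (\<Sum>j<N. (h \<bullet> e j) *\<^sub>R e j) = (\<Sum>j<N. (h \<bullet> e j)^2)"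
    by (simp add: inner_sum_right power2_eq_square)
  also have "(norm (\<Sum>j<N. (h \<bullet> e j) *\<^sub>R e j))^2 = (\<Sum>j<N. (h \<bullet> e j)^2)"
    using norm_sum_on[OF assms] by simp
  finally show "(\<Sum>j<N. (h \<bullet> e j)^2) \<le> (norm h)^2" by simp
qed simp

lemma ob_zero:
  assumes "orthonormal_basis e" "\<And>j. x \<bullet> e j = 0"
  shows "x = 0"
proof -
  let ?T = "{y. x \<bullet> y = 0}"
  have "subspace ?T" by (auto simp: subspace_def inner_add_right)
  moreover have "range e \<subseteq> ?T" using assms(2) by auto
  ultimately have "span (range e) \<subseteq> ?T" by (rule span_minimal[rotated])
  moreover have "closed ?T"
    by (intro closed_Collect_eq continuous_intros)
  ultimately have "closure (span (range e)) \<subseteq> ?T" by (rule closure_minimal)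
  moreover have "x \<in> closure (span (range e))" using assms(1) by (simp add: orthonormal_basis_def)
  ultimately have "x \<in> ?T" by blast
  then show ?thesis by simp
qed

lemma diag_expansion:
  assumes ob: "orthonormal_basis e" and S: "diag_cov_operator e S lam"
  shows "summable (\<lambda>j. (lam j * (h \<bullet> e j))^2)"
    and "S h = (\<Sum>j. (lam j * (h \<bullet> e j)) *\<^sub>R e j)"
proof -
  have on: "orthonormal e" by (rule ob_orthonormal[OF ob])
  have "\<forall>j. S (e j) = lam j *\<^sub>R e j \<and> lam j > 0"
    by (rule S[unfolded diag_cov_operator_def, THEN conjunct2, THEN conjunct2, THEN conjunct2, THEN conjunct2])
  then have lamj: "S (e j) = lam j *\<^sub>R e j" "lam j > 0" for j by auto
  have Ssym: "\<forall>x y. S x \<bullet> y = x \<bullet> S y"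
    by (rule S[unfolded diag_cov_operator_def, THEN conjunct2, THEN conjunct1])
  have "summable (\<lambda>j. S (e j) \<bullet> e j)"
    by (rule S[unfolded diag_cov_operator_def, THEN conjunct2, THEN conjunct2, THEN conjunct2, THEN conjunct1])
  moreover have "S (e j) \<bullet> e j = lam j" for j using lamj on by (simp add: orthonormal_def)
  ultimately have "summable lam" by simp
  then have "lam \<longlonglongrightarrow> 0" by (rule summable_LIMSEQ_zero)
  then have "bounded (range lam)" by (rule convergent_imp_bounded)
  then obtain L where L: "\<And>j. \<bar>lam j\<bar> \<le> L" by (auto simp: bounded_iff)
  show sm: "summable (\<lambda>j. (lam j * (h \<bullet> e j))^2)"
  proof (rule summable_comparison_test[OF _ summable_mult[OF bessel[OF on, of h], of "L^2"]])
    show "\<exists>N. \<forall>j\<ge>N. norm ((lam j * (h \<bullet> e j))^2) \<le> L^2 * (h \<bullet> e j)^2"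
    proof (intro exI allI impI)
      fix j :: nat
      have "(lam j)^2 \<le> L^2" using L[of j] by (metis abs_ge_zero power2_abs power_mono)
      then have "(lam j)^2 * (h \<bullet> e j)^2 \<le> L^2 * (h \<bullet> e j)^2" by (simp add: mult_right_mono)
      then show "norm ((lam j * (h \<bullet> e j))^2) \<le> L^2 * (h \<bullet> e j)^2" by (simp add: power_mult_distrib)
    qed
  qed
  have "S h - (\<Sum>j. (lam j * (h \<bullet> e j)) *\<^sub>R e j) = 0"
  proof (rule ob_zero[OF ob])
    fix k
    have "S h \<bullet> e k = h \<bullet> S (e k)" using Ssym by blast
    also have "\<dots> = lam k * (h \<bullet> e k)" using lamj by simp
    finally show "(S h - (\<Sum>j. (lam j * (h \<bullet> e j)) *\<^sub>R e j)) \<bullet> e k = 0"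
      using inner_suminf_on[OF on sm, of k] by (simp add: inner_diff_left)
  qed
  then show "S h = (\<Sum>j. (lam j * (h \<bullet> e j)) *\<^sub>R e j)" by simp
qed

lemma sq_diff_le: "((x::real) - y)^2 \<le> 2 * x^2 + 2 * y^2"
proof -
  have "(x - y)^2 + (x + y)^2 = 2 * x^2 + 2 * y^2" by (simp add: power2_eq_square algebra_simps)
  moreover have "(x + y)^2 \<ge> 0" by simp
  ultimately show ?thesis by linarith
qed

lemma dist_series:
  fixes e :: "nat \<Rightarrow> 'h::{real_inner,complete_space}"
  assumes on: "orthonormal e" and a: "summable (\<lambda>j. (a j)^2)" and b: "summable (\<lambda>j. (b j)^2)"
  shows "(dist (\<Sum>j. a j *\<^sub>R e j) (\<Sum>j. b j *\<^sub>R e j))^2 = (\<Sum>j. (a j - b j)^2)"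
proof -
  have d: "summable (\<lambda>j. (a j - b j)^2)"
  proof (rule summable_comparison_test[OF _ summable_add[OF summable_mult[OF a, of 2] summable_mult[OF b, of 2]]])
    show "\<exists>N. \<forall>j\<ge>N. norm ((a j - b j)^2) \<le> 2 * (a j)^2 + 2 * (b j)^2"
    proof (intro exI allI impI)
      fix j :: nat
      show "norm ((a j - b j)^2) \<le> 2 * (a j)^2 + 2 * (b j)^2" using sq_diff_le[of "a j" "b j"] by simp
    qed
  qed
  have "(\<Sum>j. a j *\<^sub>R e j) - (\<Sum>j. b j *\<^sub>R e j) = (\<Sum>j. (a j - b j) *\<^sub>R e j)"
    by (simp add: suminf_diff summable_on[OF on a] summable_on[OF on b] scaleR_diff_left)
  then show ?thesis using norm_suminf_on[OF on d] by (simp add: dist_norm)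
qed



section \<open>Gaussian moments\<close>

lemma gauss_int_pow:
  fixes Z :: "'a \<Rightarrow> real"
  assumes D: "distributed M lborel Z (normal_density 0 (sqrt v))" and v: "v > 0"
  shows "integrable M (\<lambda>\<omega>. Z \<omega> ^ k)"
proof -
  have "integrable lborel (\<lambda>x. normal_density 0 (sqrt v) x * x ^ k)"
    using integrable_normal_moment[of "sqrt v" 0 k] v by simp
  then show ?thesis
    using distributed_integrable[OF D, of "\<lambda>x. x ^ k"] by simp
qed

lemma gauss_mom:
  fixes Z :: "'a \<Rightarrow> real"
  assumes D: "distributed M lborel Z (normal_density 0 (sqrt v))" and v: "v > 0"
  shows "(\<integral>\<omega>. Z \<omega> \<partial>M) = 0" and "(\<integral>\<omega>. (Z \<omega>)^2 \<partial>M) = v"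
    and "(\<integral>\<omega>. (Z \<omega>)^4 \<partial>M) = 3 * v^2"
proof -
  have s: "sqrt v > 0" using v by simp
  have "(\<integral>\<omega>. Z \<omega> \<partial>M) = (\<integral>x. normal_density 0 (sqrt v) x * x ^ (2 * 0 + 1) \<partial>lborel)"
    using distributed_integral[OF D, of "\<lambda>x. x"] by simp
  also have "\<dots> = 0" using integral_normal_moment_odd[OF s, of 0 0] by simp
  finally show "(\<integral>\<omega>. Z \<omega> \<partial>M) = 0" .
  have "(\<integral>\<omega>. (Z \<omega>)^2 \<partial>M) = (\<integral>x. normal_density 0 (sqrt v) x * x ^ (2 * 1) \<partial>lborel)"
    using distributed_integral[OF D, of "\<lambda>x. x^2"] by simp
  also have "\<dots> = fact (2 * 1) / ((2 / (sqrt v)\<^sup>2) ^ 1 * fact 1)"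
    using has_bochner_integral_integral_eq[OF normal_moment_even[OF s, of 0 1]] by simp
  also have "\<dots> = v" using v by (simp add: fact_numeral)
  finally show "(\<integral>\<omega>. (Z \<omega>)^2 \<partial>M) = v" .
  have "(\<integral>\<omega>. (Z \<omega>)^4 \<partial>M) = (\<integral>x. normal_density 0 (sqrt v) x * x ^ (2 * 2) \<partial>lborel)"
    using distributed_integral[OF D, of "\<lambda>x. x^4"] by simp
  also have "\<dots> = fact (2 * 2) / ((2 / (sqrt v)\<^sup>2) ^ 2 * fact 2)"
    using has_bochner_integral_integral_eq[OF normal_moment_even[OF s, of 0 2]] by simp
  also have "\<dots> = 3 * v^2" using v by (simp add: fact_numeral power2_eq_square field_simps)
  finally show "(\<integral>\<omega>. (Z \<omega>)^4 \<partial>M) = 3 * v^2" .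
qed

section \<open>Independence of functions of disjoint blocks\<close>

context prob_space
begin

lemma indep_blocks:
  fixes \<zeta> :: "'i \<Rightarrow> 'a \<Rightarrow> real"
  assumes ind: "indep_vars (\<lambda>_. borel) \<zeta> I" and AB: "A \<inter> B = {}" "A \<subseteq> I" "B \<subseteq> I"
    and F: "F \<in> borel_measurable (PiM A (\<lambda>_. borel))" and G: "G \<in> borel_measurable (PiM B (\<lambda>_. borel))"
  shows "indep_var borel (\<lambda>\<omega>. F (restrict (\<lambda>k. \<zeta> k \<omega>) A)) borel (\<lambda>\<omega>. G (restrict (\<lambda>k. \<zeta> k \<omega>) B))"
  using indep_var_compose[OF indep_var_restrict[OF ind AB] F G] by (simp add: comp_def)

lemma indep_pair:
  fixes \<zeta> :: "'i \<Rightarrow> 'a \<Rightarrow> real"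
  assumes ind: "indep_vars (\<lambda>_. borel) \<zeta> I" and "a \<in> I" "b \<in> I" "a \<noteq> b"
  shows "indep_var borel (\<zeta> a) borel (\<zeta> b)"
proof -
  have "indep_var borel (\<lambda>\<omega>. (\<lambda>x. x a) (restrict (\<lambda>k. \<zeta> k \<omega>) {a})) borel (\<lambda>\<omega>. (\<lambda>x. x b) (restrict (\<lambda>k. \<zeta> k \<omega>) {b}))"
    using assms by (intro indep_blocks[OF ind]) (auto intro!: measurable_component_singleton)
  then show ?thesis by (simp add: fun_eq_iff[symmetric])
qed

lemma fam_pair:
  fixes \<zeta> :: "'i \<Rightarrow> 'a \<Rightarrow> real"
  assumes ind: "indep_vars (\<lambda>_. borel) \<zeta> I"
    and D: "\<And>k. k \<in> I \<Longrightarrow> distributed M lborel (\<zeta> k) (normal_density 0 (sqrt (v k)))"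
    and v: "\<And>k. k \<in> I \<Longrightarrow> v k > 0"
    and ab: "a \<in> I" "b \<in> I"
  shows "integrable M (\<lambda>\<omega>. \<zeta> a \<omega> * \<zeta> b \<omega>)"
    and "(\<integral>\<omega>. \<zeta> a \<omega> * \<zeta> b \<omega> \<partial>M) = (if a = b then v a else 0)"
proof -
  have i1: "integrable M (\<zeta> k)" if "k \<in> I" for k
    using gauss_int_pow[OF D[OF that] v[OF that], of 1] by simp
  show "integrable M (\<lambda>\<omega>. \<zeta> a \<omega> * \<zeta> b \<omega>)"
  proof (cases "a = b")
    case True then show ?thesis
      using gauss_int_pow[OF D[OF ab(1)] v[OF ab(1)], of 2] by (simp add: power2_eq_square)
  next
    case False then show ?thesis
      using indep_var_integrable[OF indep_pair[OF ind ab False] i1[OF ab(1)] i1[OF ab(2)]] by simp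
  qed
  show "(\<integral>\<omega>. \<zeta> a \<omega> * \<zeta> b \<omega> \<partial>M) = (if a = b then v a else 0)"
  proof (cases "a = b")
    case True then show ?thesis
      using gauss_mom(2)[OF D[OF ab(1)] v[OF ab(1)]] by (simp add: power2_eq_square)
  next
    case False then show ?thesis
      using indep_var_lebesgue_integral[OF indep_pair[OF ind ab False] i1[OF ab(1)] i1[OF ab(2)]]
        gauss_mom(1)[OF D[OF ab(1)] v[OF ab(1)]] by simp
  qed
qed

lemma fam_bilinear:
  fixes \<zeta> :: "'i \<Rightarrow> 'a \<Rightarrow> real"
  assumes ind: "indep_vars (\<lambda>_. borel) \<zeta> I"
    and D: "\<And>k. k \<in> I \<Longrightarrow> distributed M lborel (\<zeta> k) (normal_density 0 (sqrt (v k)))"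
    and v: "\<And>k. k \<in> I \<Longrightarrow> v k > 0"
    and fin: "finite I"
  shows "integrable M (\<lambda>\<omega>. (\<Sum>k\<in>I. a k * \<zeta> k \<omega>) * (\<Sum>l\<in>I. b l * \<zeta> l \<omega>))"
    and "(\<integral>\<omega>. (\<Sum>k\<in>I. a k * \<zeta> k \<omega>) * (\<Sum>l\<in>I. b l * \<zeta> l \<omega>) \<partial>M) = (\<Sum>k\<in>I. a k * b k * v k)"
proof -
  have eq: "(\<lambda>\<omega>. (\<Sum>k\<in>I. a k * \<zeta> k \<omega>) * (\<Sum>l\<in>I. b l * \<zeta> l \<omega>))
      = (\<lambda>\<omega>. \<Sum>k\<in>I. \<Sum>l\<in>I. a k * b l * (\<zeta> k \<omega> * \<zeta> l \<omega>))"
    by (simp add: sum_product mult_ac)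
  have int: "integrable M (\<lambda>\<omega>. a k * b l * (\<zeta> k \<omega> * \<zeta> l \<omega>))" if "k \<in> I" "l \<in> I" for k l
    using fam_pair(1)[OF ind D v that] by simp
  show "integrable M (\<lambda>\<omega>. (\<Sum>k\<in>I. a k * \<zeta> k \<omega>) * (\<Sum>l\<in>I. b l * \<zeta> l \<omega>))"
    unfolding eq by (auto intro!: Bochner_Integration.integrable_sum int)
  have "(\<integral>\<omega>. (\<Sum>k\<in>I. a k * \<zeta> k \<omega>) * (\<Sum>l\<in>I. b l * \<zeta> l \<omega>) \<partial>M)
      = (\<Sum>k\<in>I. \<Sum>l\<in>I. (\<integral>\<omega>. a k * b l * (\<zeta> k \<omega> * \<zeta> l \<omega>) \<partial>M))"
    unfolding eq using int by (simp add: Bochner_Integration.integral_sum Bochner_Integration.integrable_sum)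
  also have "\<dots> = (\<Sum>k\<in>I. \<Sum>l\<in>I. a k * b l * (if k = l then v k else 0))"
    using fam_pair(2)[OF ind D v] by (intro sum.cong refl) simp
  also have "\<dots> = (\<Sum>k\<in>I. a k * b k * v k)"
    using fin by (simp add: if_distrib cong: if_cong)
  finally show "(\<integral>\<omega>. (\<Sum>k\<in>I. a k * \<zeta> k \<omega>) * (\<Sum>l\<in>I. b l * \<zeta> l \<omega>) \<partial>M) = (\<Sum>k\<in>I. a k * b k * v k)" .
qed

section \<open>Variance of a sum of 4-dependent centred variables\<close>

lemma int_prod_sq:
  fixes X Y :: "'a \<Rightarrow> real"
  assumes "integrable M (\<lambda>\<omega>. (X \<omega>)^2)" "integrable M (\<lambda>\<omega>. (Y \<omega>)^2)"
    "X \<in> borel_measurable M" "Y \<in> borel_measurable M"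
  shows "integrable M (\<lambda>\<omega>. X \<omega> * Y \<omega>)"
proof (rule Bochner_Integration.integrable_bound[OF Bochner_Integration.integrable_add[OF assms(1,2)]])
  show "(\<lambda>\<omega>. X \<omega> * Y \<omega>) \<in> borel_measurable M" using assms(3,4) by measurable
  show "AE \<omega> in M. norm (X \<omega> * Y \<omega>) \<le> norm ((X \<omega>)^2 + (Y \<omega>)^2)"
  proof (rule AE_I2)
    fix \<omega>
    have "0 \<le> (\<bar>X \<omega>\<bar> - \<bar>Y \<omega>\<bar>)^2" by simp
    then have "2 * \<bar>X \<omega>\<bar> * \<bar>Y \<omega>\<bar> \<le> (X \<omega>)^2 + (Y \<omega>)^2"
      by (simp add: power2_eq_square algebra_simps)
    then show "norm (X \<omega> * Y \<omega>) \<le> norm ((X \<omega>)^2 + (Y \<omega>)^2)"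
    proof -
      assume h: "2 * \<bar>X \<omega>\<bar> * \<bar>Y \<omega>\<bar> \<le> (X \<omega>)^2 + (Y \<omega>)^2"
      have "0 \<le> \<bar>X \<omega>\<bar> * \<bar>Y \<omega>\<bar>" by simp
      with h have "\<bar>X \<omega>\<bar> * \<bar>Y \<omega>\<bar> \<le> (X \<omega>)^2 + (Y \<omega>)^2" by linarith
      then show ?thesis by (simp add: abs_mult)
    qed
  qed
qed

lemma prod_le_sq: "(x::real) * y \<le> (x^2 + y^2) / 2"
proof -
  have "0 \<le> (x - y)^2" by simp
  then show ?thesis by (simp add: power2_eq_square algebra_simps)
qed

lemma card_near: "card ({1..m} \<inter> {k. \<not> (i + 4 \<le> k) \<and> \<not> (k + 4 \<le> i)}) \<le> (7::nat)"
  for i m :: nat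
proof -
  have "{1..m} \<inter> {k. \<not> (i + 4 \<le> k) \<and> \<not> (k + 4 \<le> i)} \<subseteq> {i - 3..i + 3}" by auto
  then have "card ({1..m} \<inter> {k. \<not> (i + 4 \<le> k) \<and> \<not> (k + 4 \<le> i)}) \<le> card {i - 3..i + 3}"
    by (intro card_mono) auto
  also have "\<dots> \<le> 7" by simp
  finally show ?thesis .
qed

lemma avg_var:
  fixes Z :: "nat \<Rightarrow> 'a \<Rightarrow> real"
  assumes meas: "\<And>i. i \<in> {1..m} \<Longrightarrow> Z i \<in> borel_measurable M"
    and sq: "\<And>i. i \<in> {1..m} \<Longrightarrow> integrable M (\<lambda>\<omega>. (Z i \<omega>)^2)"
    and bnd: "\<And>i. i \<in> {1..m} \<Longrightarrow> (\<integral>\<omega>. (Z i \<omega>)^2 \<partial>M) \<le> B"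
    and far: "\<And>i k. i \<in> {1..m} \<Longrightarrow> k \<in> {1..m} \<Longrightarrow> i + 4 \<le> k \<Longrightarrow> (\<integral>\<omega>. Z i \<omega> * Z k \<omega> \<partial>M) = 0"
  shows "integrable M (\<lambda>\<omega>. (\<Sum>i=1..m. Z i \<omega>)^2)"
    and "(\<integral>\<omega>. (\<Sum>i=1..m. Z i \<omega>)^2 \<partial>M) \<le> 7 * real m * B"
proof -
  have eq: "(\<lambda>\<omega>. (\<Sum>i=1..m. Z i \<omega>)^2) = (\<lambda>\<omega>. \<Sum>i=1..m. \<Sum>k=1..m. Z i \<omega> * Z k \<omega>)"
    by (simp add: power2_eq_square sum_product)
  have ip: "integrable M (\<lambda>\<omega>. Z i \<omega> * Z k \<omega>)" if "i \<in> {1..m}" "k \<in> {1..m}" for i k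
    using int_prod_sq[OF sq[OF that(1)] sq[OF that(2)] meas[OF that(1)] meas[OF that(2)]] .
  show "integrable M (\<lambda>\<omega>. (\<Sum>i=1..m. Z i \<omega>)^2)"
    unfolding eq by (auto intro!: Bochner_Integration.integrable_sum ip)
  have le: "(\<integral>\<omega>. Z i \<omega> * Z k \<omega> \<partial>M) \<le> (if \<not> (i + 4 \<le> k) \<and> \<not> (k + 4 \<le> i) then B else 0)"
    if ik: "i \<in> {1..m}" "k \<in> {1..m}" for i k
  proof (cases "\<not> (i + 4 \<le> k) \<and> \<not> (k + 4 \<le> i)")
    case True
    have "(\<integral>\<omega>. Z i \<omega> * Z k \<omega> \<partial>M) \<le> (\<integral>\<omega>. ((Z i \<omega>)^2 + (Z k \<omega>)^2) / 2 \<partial>M)"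
      using ik by (intro Bochner_Integration.integral_mono ip Bochner_Integration.integrable_divide Bochner_Integration.integrable_add sq prod_le_sq) auto
    also have "\<dots> = ((\<integral>\<omega>. (Z i \<omega>)^2 \<partial>M) + (\<integral>\<omega>. (Z k \<omega>)^2 \<partial>M)) / 2"
      using ik sq by (simp add: Bochner_Integration.integral_add)
    also have "\<dots> \<le> B" using bnd[OF ik(1)] bnd[OF ik(2)] by simp
    finally show ?thesis using True by simp
  next
    case False
    then have "i + 4 \<le> k \<or> k + 4 \<le> i" by simp
    then have "(\<integral>\<omega>. Z i \<omega> * Z k \<omega> \<partial>M) = 0"
      using far[OF ik] far[OF ik(2,1)] by (auto simp: mult.commute)
    then show ?thesis using False by auto
  qed
  have "(\<integral>\<omega>. (\<Sum>i=1..m. Z i \<omega>)^2 \<partial>M) = (\<Sum>i=1..m. (\<integral>\<omega>. (\<Sum>k=1..m. Z i \<omega> * Z k \<omega>) \<partial>M))"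
    unfolding eq by (rule Bochner_Integration.integral_sum) (auto intro!: Bochner_Integration.integrable_sum ip)
  also have "\<dots> = (\<Sum>i=1..m. \<Sum>k=1..m. (\<integral>\<omega>. Z i \<omega> * Z k \<omega> \<partial>M))"
    by (intro sum.cong refl Bochner_Integration.integral_sum ip) auto
  also have "\<dots> \<le> (\<Sum>i=1..m. \<Sum>k=1..m. (if \<not> (i + 4 \<le> k) \<and> \<not> (k + 4 \<le> i) then B else 0))"
    using le by (intro sum_mono) auto
  also have "\<dots> \<le> (\<Sum>i=1..m. 7 * B)"
  proof (intro sum_mono)
    fix i assume i: "i \<in> {1..m}"
    have "0 \<le> (\<integral>\<omega>. (Z i \<omega>)^2 \<partial>M)" by (rule Bochner_Integration.integral_nonneg) simp
    then have B0: "0 \<le> B" using bnd[OF i] by linarith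
    have "(\<Sum>k=1..m. (if \<not> (i + 4 \<le> k) \<and> \<not> (k + 4 \<le> i) then B else 0))
        = B * real (card ({1..m} \<inter> {k. \<not> (i + 4 \<le> k) \<and> \<not> (k + 4 \<le> i)}))"
      by (simp add: sum.If_cases)
    also have "\<dots> \<le> B * 7" using B0 card_near[of m i] by (intro mult_left_mono) auto
    finally show "(\<Sum>k=1..m. (if \<not> (i + 4 \<le> k) \<and> \<not> (k + 4 \<le> i) then B else 0)) \<le> 7 * B" by simp
  qed
  also have "\<dots> = 7 * real m * B" by simp
  finally show "(\<integral>\<omega>. (\<Sum>i=1..m. Z i \<omega>)^2 \<partial>M) \<le> 7 * real m * B" .
qed

end



definition Wc :: "(nat + nat \<Rightarrow> real) \<Rightarrow> nat \<Rightarrow> real" where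
  "Wc x i = x (Inl i) - 2 * x (Inl (Suc i)) + x (Inl (Suc (Suc i))) + x (Inr i)"

definition muh :: "nat \<Rightarrow> (nat + nat \<Rightarrow> real) \<Rightarrow> real" where
  "muh n x = - (1 / (4 * (real n - 3))) * (\<Sum>i=1..n-3. Wc x i * Wc x (i+1))"

definition tauh :: "nat \<Rightarrow> (nat + nat \<Rightarrow> real) \<Rightarrow> real" where
  "tauh n x = (1 / (real n - 2)) * (\<Sum>i=1..n-2. (Wc x i)^2)
     + (3 / (2 * (real n - 3))) * (\<Sum>i=1..n-3. Wc x i * Wc x (i+1))"

lemma Pmat_sum:
  assumes i: "i \<in> {1..n-2}"
  shows "(\<Sum>l=1..n. Pmat n i l * f l) = f i - 2 * f (Suc i) + f (Suc (Suc i))"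
proof -
  have "(\<Sum>l=1..n. Pmat n i l * f l)
      = (\<Sum>l=1..n. (if l = i then f l else 0) + (if l = Suc i then - 2 * f l else 0) + (if l = Suc (Suc i) then f l else 0))"
    using i by (intro sum.cong refl) (auto simp: Pmat_def)
  also have "\<dots> = f i - 2 * f (Suc i) + f (Suc (Suc i))"
  proof -
    have h: "1 \<le> i" "Suc (Suc i) \<le> n" using i by auto
    then show ?thesis by (simp add: sum.distrib)
  qed
  finally show ?thesis .
qed

lemma PPt_diag: "i \<in> {1..n-2} \<Longrightarrow> PPt n i i = 6"
  unfolding PPt_def by (subst Pmat_sum) (auto simp: Pmat_def)

lemma PPt_off: "i \<in> {1..n-2} \<Longrightarrow> Suc i \<in> {1..n-2} \<Longrightarrow> PPt n i (Suc i) = -4"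
  unfolding PPt_def by (subst Pmat_sum) (auto simp: Pmat_def)

lemma PPt_far: "i \<in> {1..n-2} \<Longrightarrow> k \<in> {1..n-2} \<Longrightarrow> PPt n i k = PPt n k i"
  unfolding PPt_def by (simp add: mult.commute)

lemma sq_sum2: "((x::real) + y)^2 \<le> 2 * (x^2 + y^2)"
proof -
  have "0 \<le> (x - y)^2" by simp
  then show ?thesis by (simp add: power2_eq_square algebra_simps)
qed

lemma pow4_sum2: "((x::real) + y)^4 \<le> 8 * (x^4 + y^4)"
proof -
  have a: "(x + y)^2 \<le> 2 * (x^2 + y^2)" by (rule sq_sum2)
  have "(x + y)^4 = ((x + y)^2)^2" by simp
  also have "\<dots> \<le> (2 * (x^2 + y^2))^2"
    using a by (intro power_mono) auto
  also have "\<dots> = 4 * (x^2 + y^2)^2" unfolding power_mult_distrib by simp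
  also have "(x^2 + y^2)^2 \<le> 2 * ((x^2)^2 + (y^2)^2)" by (rule sq_sum2)
  finally show ?thesis by simp
qed

lemma pow4_sum4: "((a::real) + b + c + d)^4 \<le> 64 * (a^4 + b^4 + c^4 + d^4)"
proof -
  have "(a + b + c + d)^4 = ((a + b) + (c + d))^4" by (simp add: add.assoc)
  also have "\<dots> \<le> 8 * ((a + b)^4 + (c + d)^4)" by (rule pow4_sum2)
  also have "\<dots> \<le> 8 * (8 * (a^4 + b^4) + 8 * (c^4 + d^4))"
    using pow4_sum2[of a b] pow4_sum2[of c d] by simp
  finally show ?thesis by simp
qed

lemma Wc_pow4: "(Wc x i)^4 \<le> 64 * ((x (Inl i))^4 + 16 * (x (Inl (Suc i)))^4 + (x (Inl (Suc (Suc i))))^4 + (x (Inr i))^4)"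
proof -
  have "(Wc x i)^4 = (x (Inl i) + (- 2 * x (Inl (Suc i))) + x (Inl (Suc (Suc i))) + x (Inr i))^4"
    by (simp add: Wc_def)
  also have "\<dots> \<le> 64 * ((x (Inl i))^4 + (- 2 * x (Inl (Suc i)))^4 + (x (Inl (Suc (Suc i))))^4 + (x (Inr i))^4)"
    by (rule pow4_sum4)
  also have "(- 2 * x (Inl (Suc i)))^4 = 16 * (x (Inl (Suc i)))^4" by (simp add: power_mult_distrib)
  finally show ?thesis .
qed

lemma Wc_restrict: "{Inl i, Inl (Suc i), Inl (Suc (Suc i)), Inr i} \<subseteq> S \<Longrightarrow> Wc (restrict x S) i = Wc x i"
  by (simp add: Wc_def)

lemma Wc_meas:
  assumes "{Inl i, Inl (Suc i), Inl (Suc (Suc i)), Inr i} \<subseteq> S"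
  shows "(\<lambda>y. Wc y i) \<in> borel_measurable (PiM S (\<lambda>_. borel))"
proof -
  have m: "(\<lambda>y. y k) \<in> borel_measurable (PiM S (\<lambda>_. borel))" if "k \<in> S" for k
    using measurable_component_singleton[OF that, of "\<lambda>_. borel"] by simp
  show ?thesis unfolding Wc_def using assms
    by (intro borel_measurable_add borel_measurable_diff borel_measurable_times m borel_measurable_const) auto
qed

locale gfam = prob_space +
  fixes n :: nat and mu tau :: real and \<zeta> :: "nat + nat \<Rightarrow> 'a \<Rightarrow> real"
  assumes n4: "n \<ge> 4" and ind: "indep_vars (\<lambda>_. borel) \<zeta> ({1..n} <+> {1..n-2})"
    and Du: "\<And>r. r \<in> {1..n} \<Longrightarrow> distributed M lborel (\<zeta> (Inl r)) (normal_density 0 (sqrt mu))"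
    and Dv: "\<And>s. s \<in> {1..n-2} \<Longrightarrow> distributed M lborel (\<zeta> (Inr s)) (normal_density 0 (sqrt tau))"
    and mu: "mu > 0" and tau: "tau > 0"
begin

abbreviation "I \<equiv> {1..n} <+> {1..n-2}"

definition v :: "nat + nat \<Rightarrow> real" where "v k = (case k of Inl _ \<Rightarrow> mu | Inr _ \<Rightarrow> tau)"

lemma D: "k \<in> I \<Longrightarrow> distributed M lborel (\<zeta> k) (normal_density 0 (sqrt (v k)))"
  using Du Dv by (auto simp: v_def)

lemma vpos: "k \<in> I \<Longrightarrow> v k > 0"
  using mu tau by (auto simp: v_def split: sum.split)

lemma finI: "finite I" by simp

lemma meas_zeta: "k \<in> I \<Longrightarrow> \<zeta> k \<in> borel_measurable M"
  using ind by (auto simp: indep_vars_def)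

lemma int4: "k \<in> I \<Longrightarrow> integrable M (\<lambda>\<omega>. (\<zeta> k \<omega>)^4)"
  using gauss_int_pow[OF D vpos] .

lemma mom4: "k \<in> I \<Longrightarrow> (\<integral>\<omega>. (\<zeta> k \<omega>)^4 \<partial>M) = 3 * (v k)^2"
  using gauss_mom(3)[OF D vpos] .

definition W :: "nat \<Rightarrow> 'a \<Rightarrow> real" where "W i \<omega> = Wc (\<lambda>k. \<zeta> k \<omega>) i"

definition cW :: "nat \<Rightarrow> nat + nat \<Rightarrow> real" where
  "cW i k = (case k of Inl r \<Rightarrow> Pmat n i r | Inr s \<Rightarrow> (if s = i then 1 else 0))"

lemma W_rep: assumes i: "i \<in> {1..n-2}" shows "W i \<omega> = (\<Sum>k\<in>I. cW i k * \<zeta> k \<omega>)"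
proof -
  have 1: "(\<Sum>k\<in>I. cW i k * \<zeta> k \<omega>) = (\<Sum>r=1..n. cW i (Inl r) * \<zeta> (Inl r) \<omega>) + (\<Sum>s=1..n-2. cW i (Inr s) * \<zeta> (Inr s) \<omega>)"
    by (simp add: sum.Plus)
  have 2: "(\<Sum>s=1..n-2. cW i (Inr s) * \<zeta> (Inr s) \<omega>) = (\<Sum>s=1..n-2. (if s = i then \<zeta> (Inr s) \<omega> else 0))"
    by (intro sum.cong refl) (simp add: cW_def)
  have 3: "(\<Sum>s=1..n-2. (if s = i then \<zeta> (Inr s) \<omega> else 0)) = \<zeta> (Inr i) \<omega>"
    using i by simp
  have 4: "(\<Sum>r=1..n. cW i (Inl r) * \<zeta> (Inl r) \<omega>) = (\<Sum>r=1..n. Pmat n i r * \<zeta> (Inl r) \<omega>)"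
    by (simp add: cW_def)
  have 5: "(\<Sum>r=1..n. Pmat n i r * \<zeta> (Inl r) \<omega>) = \<zeta> (Inl i) \<omega> - 2 * \<zeta> (Inl (Suc i)) \<omega> + \<zeta> (Inl (Suc (Suc i))) \<omega>"
    by (rule Pmat_sum[OF i])
  show ?thesis unfolding 1 2 3 4 5 by (simp add: W_def Wc_def)
qed

lemma W_meas: "i \<in> {1..n-2} \<Longrightarrow> W i \<in> borel_measurable M"
  unfolding W_def Wc_def using n4
  by (intro borel_measurable_add borel_measurable_diff borel_measurable_times meas_zeta borel_measurable_const) auto

lemma cov: assumes "i \<in> {1..n-2}" "l \<in> {1..n-2}"
  shows "integrable M (\<lambda>\<omega>. W i \<omega> * W l \<omega>)"
    and "(\<integral>\<omega>. W i \<omega> * W l \<omega> \<partial>M) = mu * PPt n i l + (if i = l then tau else 0)"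
proof -
  have eq: "(\<lambda>\<omega>. W i \<omega> * W l \<omega>) = (\<lambda>\<omega>. (\<Sum>k\<in>I. cW i k * \<zeta> k \<omega>) * (\<Sum>k\<in>I. cW l k * \<zeta> k \<omega>))"
    using assms by (simp add: W_rep)
  show "integrable M (\<lambda>\<omega>. W i \<omega> * W l \<omega>)"
    unfolding eq by (rule fam_bilinear(1)[OF ind D vpos finI])
  have "(\<integral>\<omega>. W i \<omega> * W l \<omega> \<partial>M) = (\<Sum>k\<in>I. cW i k * cW l k * v k)"
    unfolding eq by (rule fam_bilinear(2)[OF ind D vpos finI])
  also have "\<dots> = (\<Sum>r=1..n. cW i (Inl r) * cW l (Inl r) * v (Inl r)) + (\<Sum>s=1..n-2. cW i (Inr s) * cW l (Inr s) * v (Inr s))"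
    by (simp add: sum.Plus)
  also have "(\<Sum>s=1..n-2. cW i (Inr s) * cW l (Inr s) * v (Inr s)) = (\<Sum>s=1..n-2. (if s = i \<and> s = l then tau else 0))"
    by (intro sum.cong refl) (simp add: cW_def v_def)
  also have "(\<Sum>r=1..n. cW i (Inl r) * cW l (Inl r) * v (Inl r)) = (\<Sum>r=1..n. Pmat n i r * Pmat n l r * mu)"
    by (simp add: cW_def v_def)
  also have "(\<Sum>s=1..n-2. (if s = i \<and> s = l then tau else 0)) = (\<Sum>s=1..n-2. (if s = i then (if i = l then tau else 0) else 0))"
    by (intro sum.cong refl) auto
  also have "\<dots> = (if i = l then tau else 0)" using assms by simp
  also have "(\<Sum>r=1..n. Pmat n i r * Pmat n l r * mu) = mu * PPt n i l"
    by (simp add: PPt_def sum_distrib_left mult_ac)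
  finally show "(\<integral>\<omega>. W i \<omega> * W l \<omega> \<partial>M) = mu * PPt n i l + (if i = l then tau else 0)" .
qed

lemma W4: assumes i: "i \<in> {1..n-2}"
  shows "integrable M (\<lambda>\<omega>. (W i \<omega>)^4)" and "(\<integral>\<omega>. (W i \<omega>)^4 \<partial>M) \<le> 64 * (3 * tau^2 + 54 * mu^2)"
proof -
  let ?b = "\<lambda>\<omega>. 64 * ((\<zeta> (Inl i) \<omega>)^4 + 16 * (\<zeta> (Inl (Suc i)) \<omega>)^4 + (\<zeta> (Inl (Suc (Suc i))) \<omega>)^4 + (\<zeta> (Inr i) \<omega>)^4)"
  have mem: "Inl i \<in> I" "Inl (Suc i) \<in> I" "Inl (Suc (Suc i)) \<in> I" "Inr i \<in> I" using i n4 by auto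
  have ib: "integrable M ?b" using int4[OF mem(1)] int4[OF mem(2)] int4[OF mem(3)] int4[OF mem(4)] by simp
  have le: "(W i \<omega>)^4 \<le> ?b \<omega>" for \<omega> unfolding W_def by (rule Wc_pow4)
  show iw: "integrable M (\<lambda>\<omega>. (W i \<omega>)^4)"
  proof (rule Bochner_Integration.integrable_bound[OF ib])
    show "(\<lambda>\<omega>. (W i \<omega>)^4) \<in> borel_measurable M" using W_meas[OF i] by measurable
    show "AE \<omega> in M. norm ((W i \<omega>)^4) \<le> norm (?b \<omega>)"
      using le by (intro AE_I2) (simp add: zero_le_even_power)
  qed
  have "(\<integral>\<omega>. (W i \<omega>)^4 \<partial>M) \<le> (\<integral>\<omega>. ?b \<omega> \<partial>M)"
    by (intro Bochner_Integration.integral_mono iw ib le)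
  also have "\<dots> = 64 * (3 * (v (Inl i))^2 + 16 * (3 * (v (Inl (Suc i)))^2) + 3 * (v (Inl (Suc (Suc i))))^2 + 3 * (v (Inr i))^2)"
    using int4[OF mem(1)] int4[OF mem(2)] int4[OF mem(3)] int4[OF mem(4)]
      mom4[OF mem(1)] mom4[OF mem(2)] mom4[OF mem(3)] mom4[OF mem(4)] by simp
  also have "\<dots> = 64 * (3 * tau^2 + 54 * mu^2)" by (simp add: v_def)
  finally show "(\<integral>\<omega>. (W i \<omega>)^4 \<partial>M) \<le> 64 * (3 * tau^2 + 54 * mu^2)" .
qed

definition Z1 :: "nat \<Rightarrow> 'a \<Rightarrow> real" where "Z1 i \<omega> = W i \<omega> * W (Suc i) \<omega> + 4 * mu"
definition Z2 :: "nat \<Rightarrow> 'a \<Rightarrow> real" where "Z2 i \<omega> = (W i \<omega>)^2 - (tau + 6 * mu)"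
definition "Q = 3 * tau^2 + 54 * mu^2"
definition "B = 200 * Q"

lemma Q_ge: "mu^2 \<le> Q" "0 \<le> Q" unfolding Q_def by auto

lemma p4: "(x::real)^4 = (x^2)^2" by (simp add: power_mult[symmetric])

lemma two_sq_sq: "2 * ((x::real)^2 * y^2) \<le> x^4 + y^4"
proof -
  have "0 \<le> (x^2 - y^2)^2" by simp
  then have "2 * ((x::real)^2 * y^2) \<le> (x^2)^2 + (y^2)^2" by (simp add: power2_eq_square algebra_simps)
  then show ?thesis by (simp only: p4)
qed

lemma int_abs_from_sq:
  fixes Z :: "'a \<Rightarrow> real"
  assumes "integrable M (\<lambda>\<omega>. (Z \<omega>)^2)" "Z \<in> borel_measurable M"
  shows "integrable M Z"
proof (rule Bochner_Integration.integrable_bound[OF Bochner_Integration.integrable_add[OF assms(1) integrable_const[of 1]]])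
  show "Z \<in> borel_measurable M" by fact
  show "AE \<omega> in M. norm (Z \<omega>) \<le> norm ((Z \<omega>)^2 + 1)"
  proof (rule AE_I2)
    fix \<omega>
    have "\<bar>Z \<omega>\<bar> \<le> (Z \<omega>)^2 + 1"
    proof (cases "\<bar>Z \<omega>\<bar> \<le> 1")
      case True then show ?thesis by (smt (verit) zero_le_power2)
    next
      case False
      then have "\<bar>Z \<omega>\<bar> * 1 \<le> \<bar>Z \<omega>\<bar> * \<bar>Z \<omega>\<bar>" by (intro mult_left_mono) auto
      then show ?thesis by (simp add: power2_eq_square abs_mult_self)
    qed
    then show "norm (Z \<omega>) \<le> norm ((Z \<omega>)^2 + 1)" by simp
  qed
qed

lemma Z1_props: assumes i: "i \<in> {1..n-3}"
  shows "Z1 i \<in> borel_measurable M" "integrable M (\<lambda>\<omega>. (Z1 i \<omega>)^2)" "(\<integral>\<omega>. (Z1 i \<omega>)^2 \<partial>M) \<le> B"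
    "integrable M (Z1 i)" "(\<integral>\<omega>. Z1 i \<omega> \<partial>M) = 0"
proof -
  have i1: "i \<in> {1..n-2}" and i2: "Suc i \<in> {1..n-2}" using i n4 by auto
  show m: "Z1 i \<in> borel_measurable M"
    unfolding Z1_def using W_meas[OF i1] W_meas[OF i2] by measurable
  let ?b = "\<lambda>\<omega>. (W i \<omega>)^4 + (W (Suc i) \<omega>)^4 + 32 * mu^2"
  have ib: "integrable M ?b" using W4(1)[OF i1] W4(1)[OF i2] by (simp add: prob_space)
  have le: "(Z1 i \<omega>)^2 \<le> ?b \<omega>" for \<omega>
  proof -
    have "(Z1 i \<omega>)^2 \<le> 2 * ((W i \<omega> * W (Suc i) \<omega>)^2 + (4 * mu)^2)"
      unfolding Z1_def by (rule sq_sum2)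
    also have "(W i \<omega> * W (Suc i) \<omega>)^2 = (W i \<omega>)^2 * (W (Suc i) \<omega>)^2" by (simp add: power_mult_distrib)
    finally show ?thesis using two_sq_sq[of "W i \<omega>" "W (Suc i) \<omega>"] by simp
  qed
  show isq: "integrable M (\<lambda>\<omega>. (Z1 i \<omega>)^2)"
  proof (rule Bochner_Integration.integrable_bound[OF ib])
    show "(\<lambda>\<omega>. (Z1 i \<omega>)^2) \<in> borel_measurable M" using m by measurable
    show "AE \<omega> in M. norm ((Z1 i \<omega>)^2) \<le> norm (?b \<omega>)"
      using le by (intro AE_I2) (simp add: zero_le_even_power)
  qed
  have "(\<integral>\<omega>. (Z1 i \<omega>)^2 \<partial>M) \<le> (\<integral>\<omega>. ?b \<omega> \<partial>M)"
    by (intro Bochner_Integration.integral_mono isq ib le)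
  also have "\<dots> = (\<integral>\<omega>. (W i \<omega>)^4 \<partial>M) + (\<integral>\<omega>. (W (Suc i) \<omega>)^4 \<partial>M) + 32 * mu^2"
    using W4(1)[OF i1] W4(1)[OF i2] by (simp add: prob_space)
  also have "\<dots> \<le> 64 * Q + 64 * Q + 32 * Q"
  proof -
    have "(\<integral>\<omega>. (W i \<omega>)^4 \<partial>M) \<le> 64 * Q" "(\<integral>\<omega>. (W (Suc i) \<omega>)^4 \<partial>M) \<le> 64 * Q"
      using W4(2)[OF i1] W4(2)[OF i2] by (simp_all add: Q_def)
    then show ?thesis using Q_ge by linarith
  qed
  also have "\<dots> \<le> B" using Q_ge by (simp add: B_def)
  finally show "(\<integral>\<omega>. (Z1 i \<omega>)^2 \<partial>M) \<le> B" .
  show iz: "integrable M (Z1 i)" by (rule int_abs_from_sq[OF isq m])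
  have "(\<integral>\<omega>. Z1 i \<omega> \<partial>M) = (\<integral>\<omega>. W i \<omega> * W (Suc i) \<omega> \<partial>M) + 4 * mu"
    unfolding Z1_def using cov(1)[OF i1 i2] by (simp add: prob_space)
  also have "\<dots> = 0" using cov(2)[OF i1 i2] PPt_off[OF i1 i2] by simp
  finally show "(\<integral>\<omega>. Z1 i \<omega> \<partial>M) = 0" .
qed

lemma Z2_props: assumes i: "i \<in> {1..n-2}"
  shows "Z2 i \<in> borel_measurable M" "integrable M (\<lambda>\<omega>. (Z2 i \<omega>)^2)" "(\<integral>\<omega>. (Z2 i \<omega>)^2 \<partial>M) \<le> B"
    "integrable M (Z2 i)" "(\<integral>\<omega>. Z2 i \<omega> \<partial>M) = 0"
proof -
  show m: "Z2 i \<in> borel_measurable M"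
    unfolding Z2_def using W_meas[OF i] by measurable
  define c where "c = tau + 6 * mu"
  let ?b = "\<lambda>\<omega>. 2 * (W i \<omega>)^4 + 2 * c^2"
  have ib: "integrable M ?b" using W4(1)[OF i] by (simp add: prob_space)
  have le: "(Z2 i \<omega>)^2 \<le> ?b \<omega>" for \<omega>
  proof -
    have "(Z2 i \<omega>)^2 = ((W i \<omega>)^2 + (- c))^2" unfolding Z2_def c_def by (simp only: diff_conv_add_uminus)
    also have "\<dots> \<le> 2 * (((W i \<omega>)^2)^2 + (- c)^2)" by (rule sq_sum2)
    finally show ?thesis unfolding p4[of "W i \<omega>"] by (simp only: power2_minus distrib_left)
  qed
  show isq: "integrable M (\<lambda>\<omega>. (Z2 i \<omega>)^2)"
  proof (rule Bochner_Integration.integrable_bound[OF ib])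
    show "(\<lambda>\<omega>. (Z2 i \<omega>)^2) \<in> borel_measurable M" using m by measurable
    show "AE \<omega> in M. norm ((Z2 i \<omega>)^2) \<le> norm (?b \<omega>)"
      using le by (intro AE_I2) (simp add: zero_le_even_power)
  qed
  have "(\<integral>\<omega>. (Z2 i \<omega>)^2 \<partial>M) \<le> (\<integral>\<omega>. ?b \<omega> \<partial>M)"
    by (intro Bochner_Integration.integral_mono isq ib le)
  also have "\<dots> = 2 * (\<integral>\<omega>. (W i \<omega>)^4 \<partial>M) + 2 * c^2"
    using W4(1)[OF i] by (simp add: prob_space)
  also have "\<dots> \<le> 128 * Q + 3 * Q"
  proof -
    have "2 * c^2 \<le> 2 * (2 * (tau^2 + (6 * mu)^2))"
      using sq_sum2[of tau "6 * mu"] by (simp add: c_def)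
    also have "\<dots> \<le> 3 * Q" by (simp add: Q_def power_mult_distrib)
    finally have "2 * c^2 \<le> 3 * Q" .
    moreover have "(\<integral>\<omega>. (W i \<omega>)^4 \<partial>M) \<le> 64 * Q" using W4(2)[OF i] by (simp add: Q_def)
    ultimately show ?thesis by linarith
  qed
  also have "\<dots> \<le> B" using Q_ge by (simp add: B_def)
  finally show "(\<integral>\<omega>. (Z2 i \<omega>)^2 \<partial>M) \<le> B" .
  show "integrable M (Z2 i)" by (rule int_abs_from_sq[OF isq m])
  have "(\<integral>\<omega>. Z2 i \<omega> \<partial>M) = (\<integral>\<omega>. W i \<omega> * W i \<omega> \<partial>M) - (tau + 6 * mu)"
    unfolding Z2_def using cov(1)[OF i i] by (simp add: power2_eq_square prob_space)
  also have "\<dots> = 0" using cov(2)[OF i i] PPt_diag[OF i] by simp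
  finally show "(\<integral>\<omega>. Z2 i \<omega> \<partial>M) = 0" .
qed

definition "S1 i = {Inl i, Inl (Suc i), Inl (Suc (Suc i)), Inl (Suc (Suc (Suc i))), Inr i, Inr (Suc i)}"
definition "S2 i = {Inl i, Inl (Suc i), Inl (Suc (Suc i)), Inr i}"

lemma Z1_block: "Z1 i \<omega> = (\<lambda>y. Wc y i * Wc y (Suc i) + 4 * mu) (restrict (\<lambda>k. \<zeta> k \<omega>) (S1 i))"
  unfolding Z1_def W_def by (subst (1 2) Wc_restrict) (auto simp: S1_def)

lemma Z2_block: "Z2 i \<omega> = (\<lambda>y. (Wc y i)^2 - (tau + 6 * mu)) (restrict (\<lambda>k. \<zeta> k \<omega>) (S2 i))"
  unfolding Z2_def W_def by (subst Wc_restrict) (auto simp: S2_def)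

lemma Z1_far: assumes i: "i \<in> {1..n-3}" and k: "k \<in> {1..n-3}" and ik: "i + 4 \<le> k"
  shows "(\<integral>\<omega>. Z1 i \<omega> * Z1 k \<omega> \<partial>M) = 0"
proof -
  have sub: "S1 j \<subseteq> I" if "j \<in> {1..n-3}" for j using that n4 by (auto simp: S1_def)
  have meas: "(\<lambda>y. Wc y j * Wc y (Suc j) + 4 * mu) \<in> borel_measurable (PiM (S1 j) (\<lambda>_. borel))" for j
    by (intro borel_measurable_add borel_measurable_times Wc_meas borel_measurable_const) (auto simp: S1_def)
  have "indep_var borel (Z1 i) borel (Z1 k)"
    unfolding Z1_block[abs_def]
    by (rule indep_blocks[OF ind _ sub[OF i] sub[OF k] meas meas]) (use ik in \<open>auto simp: S1_def\<close>)
  then have "(\<integral>\<omega>. Z1 i \<omega> * Z1 k \<omega> \<partial>M) = (\<integral>\<omega>. Z1 i \<omega> \<partial>M) * (\<integral>\<omega>. Z1 k \<omega> \<partial>M)"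
    using Z1_props(4)[OF i] Z1_props(4)[OF k] by (rule indep_var_lebesgue_integral)
  then show ?thesis using Z1_props(5)[OF i] by simp
qed

lemma Z2_far: assumes i: "i \<in> {1..n-2}" and k: "k \<in> {1..n-2}" and ik: "i + 4 \<le> k"
  shows "(\<integral>\<omega>. Z2 i \<omega> * Z2 k \<omega> \<partial>M) = 0"
proof -
  have sub: "S2 j \<subseteq> I" if "j \<in> {1..n-2}" for j using that n4 by (auto simp: S2_def)
  have meas: "(\<lambda>y. (Wc y j)^2 - (tau + 6 * mu)) \<in> borel_measurable (PiM (S2 j) (\<lambda>_. borel))" for j
    by (intro borel_measurable_diff borel_measurable_power Wc_meas borel_measurable_const) (auto simp: S2_def)
  have "indep_var borel (Z2 i) borel (Z2 k)"
    unfolding Z2_block[abs_def]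
    by (rule indep_blocks[OF ind _ sub[OF i] sub[OF k] meas meas]) (use ik in \<open>auto simp: S2_def\<close>)
  then have "(\<integral>\<omega>. Z2 i \<omega> * Z2 k \<omega> \<partial>M) = (\<integral>\<omega>. Z2 i \<omega> \<partial>M) * (\<integral>\<omega>. Z2 k \<omega> \<partial>M)"
    using Z2_props(4)[OF i] Z2_props(4)[OF k] by (rule indep_var_lebesgue_integral)
  then show ?thesis using Z2_props(5)[OF i] by simp
qed

lemma sum1: "integrable M (\<lambda>\<omega>. (\<Sum>i=1..n-3. Z1 i \<omega>)^2)"
    "(\<integral>\<omega>. (\<Sum>i=1..n-3. Z1 i \<omega>)^2 \<partial>M) \<le> 7 * real (n-3) * B"
  using avg_var[of "n-3" Z1 B] Z1_props Z1_far by auto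

lemma sum2: "integrable M (\<lambda>\<omega>. (\<Sum>i=1..n-2. Z2 i \<omega>)^2)"
    "(\<integral>\<omega>. (\<Sum>i=1..n-2. Z2 i \<omega>)^2 \<partial>M) \<le> 7 * real (n-2) * B"
  using avg_var[of "n-2" Z2 B] Z2_props Z2_far by auto

lemma muh_err: "muh n (\<lambda>k. \<zeta> k \<omega>) - mu = - (1 / (4 * (real n - 3))) * (\<Sum>i=1..n-3. Z1 i \<omega>)"
proof -
  have N: "real n - 3 > 0" using n4 by simp
  have c: "real (n - 3) = real n - 3" using n4 by simp
  have "(\<Sum>i=1..n-3. Z1 i \<omega>) = (\<Sum>i=1..n-3. W i \<omega> * W (Suc i) \<omega>) + (real n - 3) * (4 * mu)"
    by (simp add: Z1_def sum.distrib c)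
  moreover have "muh n (\<lambda>k. \<zeta> k \<omega>) = - (1 / (4 * (real n - 3))) * (\<Sum>i=1..n-3. W i \<omega> * W (Suc i) \<omega>)"
    by (simp add: muh_def W_def)
  ultimately show ?thesis using N by (simp add: field_simps)
qed

lemma tauh_err: "tauh n (\<lambda>k. \<zeta> k \<omega>) - tau
    = (1 / (real n - 2)) * (\<Sum>i=1..n-2. Z2 i \<omega>) + (3 / (2 * (real n - 3))) * (\<Sum>i=1..n-3. Z1 i \<omega>)"
proof -
  have N: "real n - 3 > 0" "real n - 2 > 0" using n4 by simp_all
  have c: "real (n - 3) = real n - 3" "real (n - 2) = real n - 2" using n4 by simp_all
  have 1: "(\<Sum>i=1..n-3. Z1 i \<omega>) = (\<Sum>i=1..n-3. W i \<omega> * W (Suc i) \<omega>) + (real n - 3) * (4 * mu)"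
    by (simp add: Z1_def sum.distrib c)
  have 2: "(\<Sum>i=1..n-2. Z2 i \<omega>) = (\<Sum>i=1..n-2. (W i \<omega>)^2) - (real n - 2) * (tau + 6 * mu)"
    by (simp add: Z2_def sum_subtractf c)
  have 3: "tauh n (\<lambda>k. \<zeta> k \<omega>) = (1 / (real n - 2)) * (\<Sum>i=1..n-2. (W i \<omega>)^2)
     + (3 / (2 * (real n - 3))) * (\<Sum>i=1..n-3. W i \<omega> * W (Suc i) \<omega>)"
    by (simp add: tauh_def W_def)
  define D2 where "D2 = real n - 2"
  define D3 where "D3 = real n - 3"
  define A where "A = 1 / D2"
  define Bc where "Bc = 3 / (2 * D3)"
  define S2 where "S2 = (\<Sum>i=1..n-2. (W i \<omega>)^2)"
  define S1 where "S1 = (\<Sum>i=1..n-3. W i \<omega> * W (Suc i) \<omega>)"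
  have d: "D2 > 0" "D3 > 0" using N by (simp_all add: D2_def D3_def)
  have ha: "A * D2 = 1" using d by (simp add: A_def)
  have hb: "Bc * D3 = 3 / 2" using d by (simp add: Bc_def)
  have "A * (S2 - D2 * (tau + 6 * mu)) + Bc * (S1 + D3 * (4 * mu))
      = A * S2 - (A * D2) * (tau + 6 * mu) + Bc * S1 + (Bc * D3) * (4 * mu)"
    by (simp only: right_diff_distrib distrib_left mult.assoc add.assoc diff_add_eq)
  also have "\<dots> = A * S2 + Bc * S1 - tau" unfolding ha hb by simp
  finally have "A * S2 + Bc * S1 - tau = A * (S2 - D2 * (tau + 6 * mu)) + Bc * (S1 + D3 * (4 * mu))" by simp
  from this[unfolded A_def Bc_def D2_def D3_def S1_def S2_def] show ?thesis unfolding 1 2 3 .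
qed

lemma B_ge: "0 \<le> B" "B \<le> 10800 * (mu^2 + tau^2)"
  unfolding B_def Q_def by auto

lemma mu_bound:
  shows "integrable M (\<lambda>\<omega>. (muh n (\<lambda>k. \<zeta> k \<omega>) - mu)^2)"
    and "(\<integral>\<omega>. (muh n (\<lambda>k. \<zeta> k \<omega>) - mu)^2 \<partial>M) \<le> 500000 * (mu^2 + tau^2) / (real n - 3)"
proof -
  define N where "N = real n - 3"
  define c where "c = 1 / (4 * N)"
  have N: "N > 0" using n4 by (simp add: N_def)
  have cn: "real (n - 3) = N" using n4 by (simp add: N_def)
  have e: "(\<lambda>\<omega>. (muh n (\<lambda>k. \<zeta> k \<omega>) - mu)^2) = (\<lambda>\<omega>. c^2 * (\<Sum>i=1..n-3. Z1 i \<omega>)^2)"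
    unfolding muh_err N_def[symmetric] c_def[symmetric] by (simp add: power_mult_distrib)
  show "integrable M (\<lambda>\<omega>. (muh n (\<lambda>k. \<zeta> k \<omega>) - mu)^2)"
    unfolding e using sum1(1) by simp
  have "(\<integral>\<omega>. (muh n (\<lambda>k. \<zeta> k \<omega>) - mu)^2 \<partial>M) = c^2 * (\<integral>\<omega>. (\<Sum>i=1..n-3. Z1 i \<omega>)^2 \<partial>M)"
    unfolding e by simp
  also have "\<dots> \<le> c^2 * (7 * N * B)"
    using sum1(2) cn by (intro mult_left_mono) auto
  also have "\<dots> = (7 * B / 16) / N"
    using N by (simp add: c_def power2_eq_square field_simps)
  also have "\<dots> \<le> (500000 * (mu^2 + tau^2)) / N"
    using N B_ge by (intro divide_right_mono) auto
  finally show "(\<integral>\<omega>. (muh n (\<lambda>k. \<zeta> k \<omega>) - mu)^2 \<partial>M) \<le> 500000 * (mu^2 + tau^2) / (real n - 3)"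
    by (simp add: N_def)
qed

lemma tau_bound:
  shows "integrable M (\<lambda>\<omega>. (tauh n (\<lambda>k. \<zeta> k \<omega>) - tau)^2)"
    and "(\<integral>\<omega>. (tauh n (\<lambda>k. \<zeta> k \<omega>) - tau)^2 \<partial>M) \<le> 500000 * (mu^2 + tau^2) / (real n - 3)"
proof -
  define N where "N = real n - 3"
  define D where "D = real n - 2"
  define a where "a = 1 / D"
  define b where "b = 3 / (2 * N)"
  have N: "N > 0" "D > 0" "N \<le> D" using n4 by (simp_all add: N_def D_def)
  have cn: "real (n - 3) = N" "real (n - 2) = D" using n4 by (simp_all add: N_def D_def)
  let ?A = "\<lambda>\<omega>. a * (\<Sum>i=1..n-2. Z2 i \<omega>)"
  let ?C = "\<lambda>\<omega>. b * (\<Sum>i=1..n-3. Z1 i \<omega>)"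
  have e: "(\<lambda>\<omega>. (tauh n (\<lambda>k. \<zeta> k \<omega>) - tau)^2) = (\<lambda>\<omega>. (?A \<omega> + ?C \<omega>)^2)"
    unfolding tauh_err N_def[symmetric] D_def[symmetric] a_def[symmetric] b_def[symmetric] ..
  have iA: "integrable M (\<lambda>\<omega>. (?A \<omega>)^2)" using sum2(1) by (simp add: power_mult_distrib)
  have iC: "integrable M (\<lambda>\<omega>. (?C \<omega>)^2)" using sum1(1) by (simp add: power_mult_distrib)
  have mZ1: "(\<lambda>\<omega>. \<Sum>i=1..n-3. Z1 i \<omega>) \<in> borel_measurable M"
    using Z1_props(1) by (intro borel_measurable_sum) auto
  have mZ2: "(\<lambda>\<omega>. \<Sum>i=1..n-2. Z2 i \<omega>) \<in> borel_measurable M"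
    using Z2_props(1) by (intro borel_measurable_sum) auto
  have ib: "integrable M (\<lambda>\<omega>. 2 * (?A \<omega>)^2 + 2 * (?C \<omega>)^2)" using iA iC by simp
  have le: "(?A \<omega> + ?C \<omega>)^2 \<le> 2 * (?A \<omega>)^2 + 2 * (?C \<omega>)^2" for \<omega>
    using sq_sum2[of "?A \<omega>" "?C \<omega>"] by simp
  have isq: "integrable M (\<lambda>\<omega>. (?A \<omega> + ?C \<omega>)^2)"
  proof (rule Bochner_Integration.integrable_bound[OF ib])
    show "(\<lambda>\<omega>. (?A \<omega> + ?C \<omega>)^2) \<in> borel_measurable M" using mZ1 mZ2 by measurable
    show "AE \<omega> in M. norm ((?A \<omega> + ?C \<omega>)^2) \<le> norm (2 * (?A \<omega>)^2 + 2 * (?C \<omega>)^2)"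
      using le by (intro AE_I2) auto
  qed
  then show "integrable M (\<lambda>\<omega>. (tauh n (\<lambda>k. \<zeta> k \<omega>) - tau)^2)" unfolding e .
  have "(\<integral>\<omega>. (tauh n (\<lambda>k. \<zeta> k \<omega>) - tau)^2 \<partial>M) \<le> (\<integral>\<omega>. 2 * (?A \<omega>)^2 + 2 * (?C \<omega>)^2 \<partial>M)"
    unfolding e by (intro Bochner_Integration.integral_mono isq ib le)
  also have "\<dots> = 2 * a^2 * (\<integral>\<omega>. (\<Sum>i=1..n-2. Z2 i \<omega>)^2 \<partial>M) + 2 * b^2 * (\<integral>\<omega>. (\<Sum>i=1..n-3. Z1 i \<omega>)^2 \<partial>M)"
    using iA iC by (simp add: power_mult_distrib mult.assoc)
  also have "\<dots> \<le> 2 * a^2 * (7 * D * B) + 2 * b^2 * (7 * N * B)"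
    using sum1(2) sum2(2) cn by (intro add_mono mult_left_mono) auto
  also have "\<dots> = 14 * B / D + 63 * B / (2 * N)"
    using N by (simp add: a_def b_def power2_eq_square field_simps)
  also have "\<dots> \<le> 14 * B / N + 63 * B / (2 * N)"
    using N B_ge by (intro add_mono divide_left_mono) auto
  also have "\<dots> = (91 * B / 2) / N" using N by (simp add: field_simps)
  also have "\<dots> \<le> (500000 * (mu^2 + tau^2)) / N"
    using N B_ge by (intro divide_right_mono) auto
  finally show "(\<integral>\<omega>. (tauh n (\<lambda>k. \<zeta> k \<omega>) - tau)^2 \<partial>M) \<le> 500000 * (mu^2 + tau^2) / (real n - 3)"
    by (simp add: N_def)
qed

end



lemma diag_bounded:
  assumes ob: "orthonormal_basis e" and S: "diag_cov_operator e S lam"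
  shows "\<exists>L. \<forall>j. \<bar>lam j\<bar> \<le> L"
proof -
  have on: "orthonormal e" by (rule ob_orthonormal[OF ob])
  have "\<forall>j. S (e j) = lam j *\<^sub>R e j \<and> lam j > 0"
    by (rule S[unfolded diag_cov_operator_def, THEN conjunct2, THEN conjunct2, THEN conjunct2, THEN conjunct2])
  then have lamj: "S (e j) = lam j *\<^sub>R e j" for j by auto
  have "summable (\<lambda>j. S (e j) \<bullet> e j)"
    by (rule S[unfolded diag_cov_operator_def, THEN conjunct2, THEN conjunct2, THEN conjunct2, THEN conjunct1])
  moreover have "S (e j) \<bullet> e j = lam j" for j using lamj on by (simp add: orthonormal_def)
  ultimately have "summable lam" by simp
  then have "lam \<longlonglongrightarrow> 0" by (rule summable_LIMSEQ_zero)
  then have "bounded (range lam)" by (rule convergent_imp_bounded)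
  then show ?thesis by (auto simp: bounded_iff)
qed

lemma conv_lemma:
  fixes M :: "'a measure" and e :: "nat \<Rightarrow> 'h::{real_inner,complete_space}" and S :: "'h \<Rightarrow> 'h"
    and est :: "nat \<Rightarrow> nat \<Rightarrow> 'a \<Rightarrow> real"
  assumes P: "prob_space M" and ob: "orthonormal_basis e" and SD: "diag_cov_operator e S lam"
    and int: "\<And>n j. n \<ge> 4 \<Longrightarrow> integrable M (\<lambda>\<omega>. (est n j \<omega> - lam j)^2)"
    and bnd: "\<And>n j. n \<ge> 4 \<Longrightarrow> (\<integral>\<omega>. (est n j \<omega> - lam j)^2 \<partial>M) \<le> Kmax / (real n - 3)"
    and K0: "Kmax \<ge> 0"
  shows "conv_in_prob M (\<lambda>n \<omega>. \<Sum>j. (est n j \<omega> * (h \<bullet> e j)) *\<^sub>R e j) (S h)"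
  unfolding conv_in_prob_def
proof (intro allI impI)
  fix \<epsilon> \<delta> :: real assume \<epsilon>: "\<epsilon> > 0" and \<delta>: "\<delta> > 0"
  interpret prob_space M by (rule P)
  have on: "orthonormal e" by (rule ob_orthonormal[OF ob])
  define hj where "hj j = (h \<bullet> e j)^2" for j
  have hs: "summable hj" unfolding hj_def by (rule bessel[OF on])
  have hj0: "hj j \<ge> 0" for j by (simp add: hj_def)
  define Hs where "Hs = (\<Sum>j. hj j)"
  have Hs0: "Hs \<ge> 0" unfolding Hs_def using hs hj0 by (rule suminf_nonneg)
  define N0 where "N0 = nat \<lceil>Kmax * Hs / (\<epsilon>^2 * \<delta>)\<rceil> + 4"
  show "eventually (\<lambda>n. \<exists>A\<in>sets M. {\<omega>\<in>space M. dist (\<Sum>j. (est n j \<omega> * (h \<bullet> e j)) *\<^sub>R e j) (S h) > \<epsilon>} \<subseteq> A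
           \<and> measure M A < \<delta>) sequentially"
    unfolding eventually_sequentially
  proof (intro exI allI impI)
    fix n assume nN: "N0 \<le> n"
    then have n4: "n \<ge> 4" by (simp add: N0_def)
    have Npos: "real n - 3 > 0" using n4 by simp
    have "Kmax * Hs / (\<epsilon>^2 * \<delta>) \<le> real (nat \<lceil>Kmax * Hs / (\<epsilon>^2 * \<delta>)\<rceil>)" by linarith
    also have "\<dots> < real n - 3" using nN by (simp add: N0_def)
    finally have nbig: "Kmax * Hs / (\<epsilon>^2 * \<delta>) < real n - 3" .
    define c where "c = Kmax * Hs / ((real n - 3) * \<epsilon>^2)"
    have c0: "c \<ge> 0" unfolding c_def using K0 Hs0 Npos by simp
    have cd: "c < \<delta>"
    proof -
      have "Kmax * Hs < \<delta> * (\<epsilon>^2 * (real n - 3))"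
        using nbig \<epsilon> \<delta> by (simp add: field_simps)
      then show ?thesis unfolding c_def using Npos \<epsilon> by (simp add: field_simps)
    qed
    define d where "d j \<omega> = (est n j \<omega> - lam j)^2 * hj j" for j \<omega>
    have d0: "d j \<omega> \<ge> 0" for j \<omega> by (simp add: d_def hj_def)
    define F where "F \<omega> = (\<Sum>j. ennreal (d j \<omega>))" for \<omega>
    have dmeas: "(\<lambda>\<omega>. d j \<omega>) \<in> borel_measurable M" for j
      unfolding d_def using borel_measurable_integrable[OF int[OF n4, of j]] by measurable
    have Fmeas: "F \<in> borel_measurable M" unfolding F_def using dmeas by measurable
    define A where "A = {\<omega>\<in>space M. ennreal (\<epsilon>^2) \<le> F \<omega>}"
    have Aset: "A \<in> sets M" unfolding A_def using Fmeas by measurable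
    have intF: "(\<integral>\<^sup>+\<omega>. F \<omega> \<partial>M) \<le> ennreal (Kmax * Hs / (real n - 3))"
    proof -
      have e1: "(\<integral>\<^sup>+\<omega>. F \<omega> \<partial>M) = (\<Sum>j. (\<integral>\<^sup>+\<omega>. ennreal (d j \<omega>) \<partial>M))"
        unfolding F_def using dmeas by (intro nn_integral_suminf) measurable
      have e2: "(\<integral>\<^sup>+\<omega>. ennreal (d j \<omega>) \<partial>M) \<le> ennreal (hj j * (Kmax / (real n - 3)))" for j
      proof -
        have ij: "integrable M (\<lambda>\<omega>. d j \<omega>)" unfolding d_def using int[OF n4, of j] by simp
        have "(\<integral>\<^sup>+\<omega>. ennreal (d j \<omega>) \<partial>M) = ennreal (\<integral>\<omega>. d j \<omega> \<partial>M)"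
          by (rule nn_integral_eq_integral[OF ij]) (simp add: d0)
        also have "(\<integral>\<omega>. d j \<omega> \<partial>M) = hj j * (\<integral>\<omega>. (est n j \<omega> - lam j)^2 \<partial>M)"
          unfolding d_def by (simp add: mult.commute)
        also have "\<dots> \<le> hj j * (Kmax / (real n - 3))"
          using bnd[OF n4, of j] hj0 by (intro mult_left_mono) auto
        finally show ?thesis by (simp add: ennreal_leI)
      qed
      have e3: "(\<Sum>j. (\<integral>\<^sup>+\<omega>. ennreal (d j \<omega>) \<partial>M)) \<le> (\<Sum>j. ennreal (hj j * (Kmax / (real n - 3))))"
        by (rule suminf_le[OF e2 summableI summableI])
      have sm: "summable (\<lambda>j. hj j * (Kmax / (real n - 3)))" by (rule summable_mult2[OF hs])
      have nn: "0 \<le> hj j * (Kmax / (real n - 3))" for j using hj0 K0 Npos by simp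
      have e4: "(\<Sum>j. ennreal (hj j * (Kmax / (real n - 3)))) = ennreal (\<Sum>j. hj j * (Kmax / (real n - 3)))"
        by (rule suminf_ennreal2[OF nn sm])
      have e5: "(\<Sum>j. hj j * (Kmax / (real n - 3))) = Hs * (Kmax / (real n - 3))"
        unfolding Hs_def by (rule suminf_mult2[OF hs, symmetric])
      show ?thesis using e1 e3 e4 e5 by (simp add: mult.commute)
    qed
    have mA: "ennreal (\<epsilon>^2) * emeasure M A \<le> (\<integral>\<^sup>+\<omega>. F \<omega> \<partial>M)"
    proof -
      have "ennreal (\<epsilon>^2) * emeasure M A = (\<integral>\<^sup>+\<omega>. ennreal (\<epsilon>^2) * indicator A \<omega> \<partial>M)"
        using Aset by (simp add: nn_integral_cmult_indicator)
      also have "\<dots> \<le> (\<integral>\<^sup>+\<omega>. F \<omega> \<partial>M)"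
        by (intro nn_integral_mono) (auto simp: A_def indicator_def)
      finally show ?thesis .
    qed
    have mAc: "measure M A \<le> c"
    proof -
      have "ennreal (\<epsilon>^2 * measure M A) = ennreal (\<epsilon>^2) * emeasure M A"
        by (simp add: emeasure_eq_measure ennreal_mult)
      also have "\<dots> \<le> ennreal (Kmax * Hs / (real n - 3))" using mA intF by (rule order.trans)
      finally have "\<epsilon>^2 * measure M A \<le> Kmax * Hs / (real n - 3)"
        using K0 Hs0 Npos by (subst (asm) ennreal_le_iff) auto
      then show ?thesis unfolding c_def using \<epsilon> Npos by (simp add: field_simps)
    qed
    have sub: "{\<omega>\<in>space M. dist (\<Sum>j. (est n j \<omega> * (h \<bullet> e j)) *\<^sub>R e j) (S h) > \<epsilon>} \<subseteq> A"
    proof (rule subsetI, rule ccontr)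
      fix \<omega> assume \<omega>: "\<omega> \<in> {\<omega>\<in>space M. dist (\<Sum>j. (est n j \<omega> * (h \<bullet> e j)) *\<^sub>R e j) (S h) > \<epsilon>}"
        and nA: "\<omega> \<notin> A"
      then have Flt: "F \<omega> < ennreal (\<epsilon>^2)" by (auto simp: A_def not_le)
      then have lt: "(\<Sum>j. ennreal (d j \<omega>)) < ennreal (\<epsilon>^2)" by (simp add: F_def)
      have ds: "summable (\<lambda>j. d j \<omega>)"
        by (rule summable_suminf_not_top[OF d0 less_top[THEN iffD2, OF order.strict_trans[OF lt ennreal_less_top]]])
      have "F \<omega> = ennreal (\<Sum>j. d j \<omega>)" unfolding F_def using d0 ds by (rule suminf_ennreal2)
      with Flt have dlt: "(\<Sum>j. d j \<omega>) < \<epsilon>^2"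
        using suminf_nonneg[OF ds d0] by (simp add: ennreal_less_iff)
      define a where "a j = est n j \<omega> * (h \<bullet> e j)" for j
      define b where "b j = lam j * (h \<bullet> e j)" for j
      have bs: "summable (\<lambda>j. (b j)^2)" unfolding b_def by (rule diag_expansion(1)[OF ob SD])
      have abd: "(a j - b j)^2 = d j \<omega>" for j
        by (simp add: a_def b_def d_def hj_def power_mult_distrib left_diff_distrib[symmetric])
      have as: "summable (\<lambda>j. (a j)^2)"
      proof (rule summable_comparison_test[OF _ summable_add[OF summable_mult[OF bs, of 2] summable_mult[OF ds, of 2]]])
        show "\<exists>N. \<forall>j\<ge>N. norm ((a j)^2) \<le> 2 * (b j)^2 + 2 * d j \<omega>"
        proof (intro exI allI impI)
          fix j :: nat
          have "(a j)^2 = (b j + (a j - b j))^2" by simp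
          also have "\<dots> \<le> 2 * ((b j)^2 + (a j - b j)^2)" by (rule sq_sum2)
          finally show "norm ((a j)^2) \<le> 2 * (b j)^2 + 2 * d j \<omega>" using abd[of j] by simp
        qed
      qed
      have "S h = (\<Sum>j. b j *\<^sub>R e j)" unfolding b_def by (rule diag_expansion(2)[OF ob SD])
      then have "(dist (\<Sum>j. (est n j \<omega> * (h \<bullet> e j)) *\<^sub>R e j) (S h))^2 = (\<Sum>j. (a j - b j)^2)"
        using dist_series[OF on as bs] by (simp add: a_def)
      also have "\<dots> = (\<Sum>j. d j \<omega>)" using abd by simp
      finally have "(dist (\<Sum>j. (est n j \<omega> * (h \<bullet> e j)) *\<^sub>R e j) (S h))^2 < \<epsilon>^2" using dlt by simp
      then have "dist (\<Sum>j. (est n j \<omega> * (h \<bullet> e j)) *\<^sub>R e j) (S h) < \<epsilon>"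
        by (rule power2_less_imp_less) (use \<epsilon> in simp)
      with \<omega> show False by simp
    qed
    show "\<exists>A\<in>sets M. {\<omega>\<in>space M. dist (\<Sum>j. (est n j \<omega> * (h \<bullet> e j)) *\<^sub>R e j) (S h) > \<epsilon>} \<subseteq> A
           \<and> measure M A < \<delta>"
      using Aset sub mAc cd by (intro bexI[of _ A]) auto
  qed
qed



theorem lemma1:
  fixes M :: "'a measure"
    and e :: "nat \<Rightarrow> 'h::{real_inner,complete_space}"
    and Su Sv :: "'h \<Rightarrow> 'h" and mu tau :: "nat \<Rightarrow> real"
    and Y0 :: "nat \<Rightarrow> nat \<Rightarrow> 'h"
    and U V X :: "nat \<Rightarrow> nat \<Rightarrow> 'a \<Rightarrow> 'h"
  assumes "prob_space M"
    and "orthonormal_basis e"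
    and "diag_cov_operator e Su mu"
    and "diag_cov_operator e Sv tau"
    and "\<And>n i. n \<ge> 4 \<Longrightarrow> i \<in> {1..n-2} \<Longrightarrow> (\<Sum>l=1..n. Pmat n i l *\<^sub>R Y0 n l) = 0"
    and "\<And>n. n \<ge> 4 \<Longrightarrow> prob_space.indep_vars M (\<lambda>_. borel)
           (\<lambda>k. case k of Inl r \<Rightarrow> U n r | Inr s \<Rightarrow> V n s) ({1..n} <+> {1..n-2})"
    and "\<And>n r. n \<ge> 4 \<Longrightarrow> r \<in> {1..n} \<Longrightarrow> centered_gaussian M (U n r) Su"
    and "\<And>n s. n \<ge> 4 \<Longrightarrow> s \<in> {1..n-2} \<Longrightarrow> centered_gaussian M (V n s) Sv"
    and "\<And>n i \<omega>. n \<ge> 4 \<Longrightarrow> i \<in> {1..n} \<Longrightarrow>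
           X n i \<omega> = (Y0 n i + (\<Sum>s=1..n-2. Qmat n i s *\<^sub>R V n s \<omega>)) + U n i \<omega>"
  shows "\<forall>h. conv_in_prob M (\<lambda>n \<omega>. \<Sum>j. (mu_hat n (\<lambda>i. X n i \<omega>) (e j) * (h \<bullet> e j)) *\<^sub>R e j) (Su h)
           \<and> conv_in_prob M (\<lambda>n \<omega>. \<Sum>j. (tau_hat n (\<lambda>i. X n i \<omega>) (e j) * (h \<bullet> e j)) *\<^sub>R e j) (Sv h)"
proof -
  interpret P: prob_space M by (rule assms(1))
  have on: "orthonormal e" by (rule ob_orthonormal[OF assms(2)])
  have ee: "e j \<bullet> e j = 1" for j using on by (simp add: orthonormal_def)
  have mupos: "mu j > 0" for j
    using assms(3)[unfolded diag_cov_operator_def, THEN conjunct2, THEN conjunct2, THEN conjunct2, THEN conjunct2] by auto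
  have taupos: "tau j > 0" for j
    using assms(4)[unfolded diag_cov_operator_def, THEN conjunct2, THEN conjunct2, THEN conjunct2, THEN conjunct2] by auto
  have Sue: "Su (e j) \<bullet> e j = mu j" for j
    using assms(3)[unfolded diag_cov_operator_def, THEN conjunct2, THEN conjunct2, THEN conjunct2, THEN conjunct2] ee
    by auto
  have Sve: "Sv (e j) \<bullet> e j = tau j" for j
    using assms(4)[unfolded diag_cov_operator_def, THEN conjunct2, THEN conjunct2, THEN conjunct2, THEN conjunct2] ee
    by auto
  define \<zeta> where "\<zeta> n j k \<omega> = (case k of Inl r \<Rightarrow> U n r \<omega> \<bullet> e j | Inr s \<Rightarrow> V n s \<omega> \<bullet> e j)" for n j k \<omega>
  have G: "gfam M n (mu j) (tau j) (\<zeta> n j)" if n4: "n \<ge> 4" for n j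
  proof (unfold_locales)
    show "4 \<le> n" by fact
    have ip: "(\<lambda>x::'h. x \<bullet> e j) \<in> borel_measurable borel"
      by (intro borel_measurable_continuous_onI continuous_intros)
    have "P.indep_vars (\<lambda>_. borel) (\<lambda>k x. (case k of Inl r \<Rightarrow> U n r | Inr s \<Rightarrow> V n s) x \<bullet> e j) ({1..n} <+> {1..n-2})"
      by (rule P.indep_vars_compose2[OF assms(6)[OF n4]]) (rule ip)
    moreover have "(\<lambda>k x. (case k of Inl r \<Rightarrow> U n r | Inr s \<Rightarrow> V n s) x \<bullet> e j) = \<zeta> n j"
      by (auto simp: fun_eq_iff \<zeta>_def split: sum.split)
    ultimately show "P.indep_vars (\<lambda>_. borel) (\<zeta> n j) ({1..n} <+> {1..n-2})" by simp
    show "distributed M lborel (\<zeta> n j (Inl r)) (normal_density 0 (sqrt (mu j)))" if "r \<in> {1..n}" for r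
    proof -
      have "real_centered_gaussian M (\<lambda>\<omega>. U n r \<omega> \<bullet> e j) (Su (e j) \<bullet> e j)"
        using assms(7)[OF n4 that] by (simp add: centered_gaussian_def)
      then show ?thesis using mupos[of j] by (auto simp: real_centered_gaussian_def Sue \<zeta>_def[abs_def])
    qed
    show "distributed M lborel (\<zeta> n j (Inr s)) (normal_density 0 (sqrt (tau j)))" if "s \<in> {1..n-2}" for s
    proof -
      have "real_centered_gaussian M (\<lambda>\<omega>. V n s \<omega> \<bullet> e j) (Sv (e j) \<bullet> e j)"
        using assms(8)[OF n4 that] by (simp add: centered_gaussian_def)
      then show ?thesis using taupos[of j] by (auto simp: real_centered_gaussian_def Sve \<zeta>_def[abs_def])
    qed
    show "mu j > 0" "tau j > 0" by (rule mupos, rule taupos)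
  qed
  have PX: "PXc n (\<lambda>i. X n i \<omega>) (e j) i = Wc (\<lambda>k. \<zeta> n j k \<omega>) i"
    if n4: "n \<ge> 4" and i: "i \<in> {1..n-2}" for n j i \<omega>
  proof -
    let ?u = "\<lambda>l. U n l \<omega> \<bullet> e j" and ?v = "\<lambda>s. V n s \<omega> \<bullet> e j"
    have xl: "X n l \<omega> \<bullet> e j = Y0 n l \<bullet> e j + (\<Sum>s=1..n-2. Qmat n l s * ?v s) + ?u l" if "l \<in> {1..n}" for l
      using assms(9)[OF n4 that] by (simp add: inner_add_left inner_sum_left)
    have "PXc n (\<lambda>i. X n i \<omega>) (e j) i
        = (\<Sum>l=1..n. Pmat n i l * (Y0 n l \<bullet> e j + (\<Sum>s=1..n-2. Qmat n l s * ?v s) + ?u l))"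
      unfolding PXc_def by (rule sum.cong[OF refl]) (simp only: xl)
    also have "\<dots> = (\<Sum>l=1..n. Pmat n i l * (Y0 n l \<bullet> e j)) + (\<Sum>l=1..n. Pmat n i l * (\<Sum>s=1..n-2. Qmat n l s * ?v s))
          + (\<Sum>l=1..n. Pmat n i l * ?u l)"
      by (simp add: distrib_left sum.distrib)
    also have "(\<Sum>l=1..n. Pmat n i l * (Y0 n l \<bullet> e j)) = (\<Sum>l=1..n. Pmat n i l *\<^sub>R Y0 n l) \<bullet> e j"
      by (simp add: inner_sum_left)
    also have "\<dots> = 0" using assms(5)[OF n4 i] by simp
    also have "(\<Sum>l=1..n. Pmat n i l * (\<Sum>s=1..n-2. Qmat n l s * ?v s))
        = (\<Sum>s=1..n-2. (\<Sum>l=1..n. Pmat n i l * Qmat n l s) * ?v s)"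
      by (simp add: sum_distrib_left sum_distrib_right mult.assoc) (rule sum.swap)
    also have "\<dots> = (\<Sum>s=1..n-2. (if i = s then ?v s else 0))"
      using PQ_id[OF n4 i] by (intro sum.cong refl) auto
    also have "\<dots> = ?v i" using i by simp
    also have "(\<Sum>l=1..n. Pmat n i l * ?u l) = ?u i - 2 * ?u (Suc i) + ?u (Suc (Suc i))"
      by (rule Pmat_sum[OF i])
    finally show ?thesis by (simp add: Wc_def \<zeta>_def)
  qed
  have MU: "mu_hat n (\<lambda>i. X n i \<omega>) (e j) = muh n (\<lambda>k. \<zeta> n j k \<omega>)" if n4: "n \<ge> 4" for n j \<omega>
    unfolding mu_hat_def muh_def using n4
    by (intro arg_cong2[where f = "(*)"] refl sum.cong) (auto simp: PX)
  have TA: "tau_hat n (\<lambda>i. X n i \<omega>) (e j) = tauh n (\<lambda>k. \<zeta> n j k \<omega>)" if n4: "n \<ge> 4" for n j \<omega>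
    unfolding tau_hat_def tauh_def using n4
    by (intro arg_cong2[where f = "(+)"] arg_cong2[where f = "(*)"] refl sum.cong) (auto simp: PX)
  obtain Lm where Lm: "\<And>j. \<bar>mu j\<bar> \<le> Lm" using diag_bounded[OF assms(2,3)] by blast
  obtain Lt where Lt: "\<And>j. \<bar>tau j\<bar> \<le> Lt" using diag_bounded[OF assms(2,4)] by blast
  define Kmax where "Kmax = 500000 * (Lm^2 + Lt^2)"
  have K0: "Kmax \<ge> 0" by (simp add: Kmax_def)
  have Kb: "500000 * ((mu j)^2 + (tau j)^2) / (real n - 3) \<le> Kmax / (real n - 3)" if "n \<ge> 4" for n j
  proof -
    have "(mu j)^2 \<le> Lm^2" using Lm[of j] by (metis abs_ge_zero power2_abs power_mono)
    moreover have "(tau j)^2 \<le> Lt^2" using Lt[of j] by (metis abs_ge_zero power2_abs power_mono)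
    ultimately have "500000 * ((mu j)^2 + (tau j)^2) \<le> Kmax" by (simp add: Kmax_def)
    then show ?thesis using that by (intro divide_right_mono) auto
  qed
  show ?thesis
  proof (intro allI conjI)
    fix h
    show "conv_in_prob M (\<lambda>n \<omega>. \<Sum>j. (mu_hat n (\<lambda>i. X n i \<omega>) (e j) * (h \<bullet> e j)) *\<^sub>R e j) (Su h)"
    proof (rule conv_lemma[OF assms(1,2,3) _ _ K0])
      fix n j :: nat assume n4: "n \<ge> 4"
      interpret g: gfam M n "mu j" "tau j" "\<zeta> n j" by (rule G[OF n4])
      show "integrable M (\<lambda>\<omega>. (mu_hat n (\<lambda>i. X n i \<omega>) (e j) - mu j)^2)"
        using g.mu_bound(1) by (simp add: MU[OF n4])
      show "(\<integral>\<omega>. (mu_hat n (\<lambda>i. X n i \<omega>) (e j) - mu j)^2 \<partial>M) \<le> Kmax / (real n - 3)"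
        using g.mu_bound(2) Kb[OF n4, of j] by (simp add: MU[OF n4])
    qed
    show "conv_in_prob M (\<lambda>n \<omega>. \<Sum>j. (tau_hat n (\<lambda>i. X n i \<omega>) (e j) * (h \<bullet> e j)) *\<^sub>R e j) (Sv h)"
    proof (rule conv_lemma[OF assms(1,2,4) _ _ K0])
      fix n j :: nat assume n4: "n \<ge> 4"
      interpret g: gfam M n "mu j" "tau j" "\<zeta> n j" by (rule G[OF n4])
      show "integrable M (\<lambda>\<omega>. (tau_hat n (\<lambda>i. X n i \<omega>) (e j) - tau j)^2)"
        using g.tau_bound(1) by (simp add: TA[OF n4])
      show "(\<integral>\<omega>. (tau_hat n (\<lambda>i. X n i \<omega>) (e j) - tau j)^2 \<partial>M) \<le> Kmax / (real n - 3)"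
        using g.tau_bound(2) Kb[OF n4, of j] by (simp add: TA[OF n4])
    qed
  qed
qed

end
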